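(* Let $(Q,\mathcal S)$ be a hypergraph with $Q=\{q_1,\dots,q_m\}$ and $\mathcal S=\{S_1,\dots,S_n\}$, where $n\ge 2$, every $S_j$ is a nonempty subset of $Q$, and $S_n=Q$. Let $G'$ be the graph constructed from $(Q,\mathcal S)$ as follows. Its vertex set consists of the vertices $q_1,\dots,q_m$; vertices $S_1,\dots,S_n$; vertices $S_1',\dots,S_n'$; a vertex $q^i_j$ for every pair $(i,j)$ with $q_i\in S_j$ (let $Q'$ be the set of these); and vertices $u_1,v,w,x$. Its edges are: $q^i_jq_i$ and $q^i_jS_j$ for every $q^i_j\in Q'$; $q_iS_j'$ whenever $q_i\in S_j$; $S_jS_k'$ for all $j,k\in\{1,\dots,n\}$; $u_1S_j$ for every $j$; $u_1v$; $wS_j'$ for every $j$; and $xv$, $xw$. Then $(Q,\mathcal S)$ has a $2$-colouring if and only if $G'$ contains the cycle $C_6$ on six vertices as a contraction.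
   Context: A $2$-colouring of a hypergraph $(Q,\mathcal S)$ is a partition $(Q_1,Q_2)$ of $Q$ such that $Q_1\cap S\neq\emptyset$ and $Q_2\cap S\neq\emptyset$ for every $S\in\mathcal S$. Contracting an edge $uv$ means deleting $u$ and $v$ and adding a new vertex adjacent to $(N(u)\cup N(v))\setminus\{u,v\}$ (no multiple edges or loops). A graph contains $H$ as a contraction if $H$ can be obtained from it by a sequence of edge contractions. *)

theory Defs
  imports Main
begin

type_synonym 'a graph = "'a set \<times> 'a set set"

definition simple_graph :: "'a graph \<Rightarrow> bool" where
  "simple_graph G \<longleftrightarrow> finite (fst G) \<and> (\<forall>e\<in>snd G. e \<subseteq> fst G \<and> card e = 2)"

text \<open>Contracting the edge uv: delete u and v and add a new vertex adjacent to
  (N(u) \<union> N(v)) - {u,v}. We name the new vertex u (which is legitimate since u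
  has been deleted), so the result is v deleted and u adjacent to N(u) \<union> N(v) - {u,v}.\<close>
definition contract_edge :: "'a graph \<Rightarrow> 'a \<Rightarrow> 'a \<Rightarrow> 'a graph" where
  "contract_edge G u v =
     (fst G - {v},
      {e \<in> snd G. v \<notin> e} \<union> {{u, w} | w. {v, w} \<in> snd G \<and> w \<noteq> u})"

inductive contracts_to :: "'a graph \<Rightarrow> 'a graph \<Rightarrow> bool" for G :: "'a graph" where
  refl: "contracts_to G G"
| step: "contracts_to G H \<Longrightarrow> {u, v} \<in> snd H \<Longrightarrow> u \<noteq> v \<Longrightarrow> contracts_to G (contract_edge H u v)"

definition graph_iso :: "'a graph \<Rightarrow> 'b graph \<Rightarrow> bool" where
  "graph_iso G H \<longleftrightarrow> (\<exists>f. bij_betw f (fst G) (fst H) \<and>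
      (\<forall>x\<in>fst G. \<forall>y\<in>fst G. {x, y} \<in> snd G \<longleftrightarrow> {f x, f y} \<in> snd H))"

definition has_contraction :: "'a graph \<Rightarrow> 'b graph \<Rightarrow> bool" where
  "has_contraction G H \<longleftrightarrow> (\<exists>K. contracts_to G K \<and> graph_iso K H)"

definition C6 :: "nat graph" where
  "C6 = ({0..<6}, {{i, (i + 1) mod 6} | i. i < 6})"

definition two_colouring :: "'q set \<Rightarrow> 'q set set \<Rightarrow> 'q set \<Rightarrow> 'q set \<Rightarrow> bool" where
  "two_colouring Q \<S> Q1 Q2 \<longleftrightarrow> Q1 \<union> Q2 = Q \<and> Q1 \<inter> Q2 = {} \<and>
     (\<forall>S\<in>\<S>. Q1 \<inter> S \<noteq> {} \<and> Q2 \<inter> S \<noteq> {})"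

datatype 'q vtx = Qv 'q | Sv nat | Sp nat | Qp 'q nat | U1 | Vv | Wv | Xv

definition G' :: "'q set \<Rightarrow> (nat \<Rightarrow> 'q set) \<Rightarrow> nat \<Rightarrow> 'q vtx graph" where
  "G' Q S n =
    (Qv ` Q \<union> Sv ` {1..n} \<union> Sp ` {1..n} \<union> {Qp q j | q j. j \<in> {1..n} \<and> q \<in> S j}
       \<union> {U1, Vv, Wv, Xv},
     {{Qp q j, Qv q} | q j. j \<in> {1..n} \<and> q \<in> S j}
     \<union> {{Qp q j, Sv j} | q j. j \<in> {1..n} \<and> q \<in> S j}
     \<union> {{Qv q, Sp j} | q j. j \<in> {1..n} \<and> q \<in> S j}
     \<union> {{Sv j, Sp k} | j k. j \<in> {1..n} \<and> k \<in> {1..n}}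
     \<union> {{U1, Sv j} | j. j \<in> {1..n}}
     \<union> {{U1, Vv}}
     \<union> {{Wv, Sp j} | j. j \<in> {1..n}}
     \<union> {{Xv, Vv}, {Xv, Wv}})"

end

theory Submission
  imports Defs
begin


definition conn :: "'a graph \<Rightarrow> 'a set \<Rightarrow> bool" where
  "conn G X \<longleftrightarrow> (\<forall>Y. Y \<subseteq> X \<longrightarrow> Y \<noteq> {} \<longrightarrow> Y \<noteq> X \<longrightarrow> (\<exists>a\<in>Y. \<exists>b\<in>X - Y. {a,b} \<in> snd G))"

definition wfg :: "'a graph \<Rightarrow> bool" where
  "wfg G \<longleftrightarrow> (\<forall>e\<in>snd G. e \<subseteq> fst G \<and> card e = 2)"

lemma conn_sub_single: "X \<subseteq> {x} \<Longrightarrow> conn G X"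
  unfolding conn_def by blast

lemma conn_single: "conn G {x}"
  by (rule conn_sub_single) simp

lemma conn_union:
  assumes "conn G A" "conn G B" "a \<in> A" "b \<in> B" "{a,b} \<in> snd G"
  shows "conn G (A \<union> B)"
  unfolding conn_def
proof (intro allI impI)
  fix Y assume Y: "Y \<subseteq> A \<union> B" "Y \<noteq> {}" "Y \<noteq> A \<union> B"
  show "\<exists>x\<in>Y. \<exists>y\<in>A \<union> B - Y. {x,y} \<in> snd G"
  proof (cases "Y \<inter> A = {} \<or> A \<subseteq> Y")
    case False
    then obtain x y where "x \<in> Y \<inter> A" "y \<in> A - Y \<inter> A" "{x,y}\<in>snd G"
      using assms(1)[unfolded conn_def, rule_format, of "Y \<inter> A"] by blast
    thus ?thesis by blast
  next
    case True
    show ?thesis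
    proof (cases "Y \<inter> B = {} \<or> B \<subseteq> Y")
      case False
      then obtain x y where "x \<in> Y \<inter> B" "y \<in> B - Y \<inter> B" "{x,y}\<in>snd G"
        using assms(2)[unfolded conn_def, rule_format, of "Y \<inter> B"] by blast
      thus ?thesis by blast
    next
      case True2: True
      from True True2 Y have "(a \<in> Y \<and> b \<notin> Y) \<or> (a \<notin> Y \<and> b \<in> Y)" using assms(3,4) by blast
      thus ?thesis
      proof (elim disjE conjE)
        assume "a \<in> Y" "b \<notin> Y" thus ?thesis using assms(4,5) by blast
      next
        assume "a \<notin> Y" "b \<in> Y"
        moreover have "{b,a} \<in> snd G" using assms(5) by (simp add: insert_commute)
        ultimately show ?thesis using assms(3) by blast
      qed
    qed
  qed
qed

lemma contracts_to_trans: "contracts_to H K \<Longrightarrow> contracts_to G H \<Longrightarrow> contracts_to G K"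
  by (induction rule: contracts_to.induct) (auto intro: contracts_to.step)

lemma card2_neq: "card {a, b} = 2 \<Longrightarrow> a \<noteq> b"
  by auto

lemma wf_contract:
  assumes "wfg K" "{u,v} \<in> snd K" "u \<noteq> v"
  shows "wfg (contract_edge K u v)"
  unfolding wfg_def contract_edge_def
proof (intro ballI)
  fix e assume e: "e \<in> snd (fst K - {v}, {e \<in> snd K. v \<notin> e} \<union> {{u, w} |w. {v, w} \<in> snd K \<and> w \<noteq> u})"
  have uK: "u \<in> fst K" using assms unfolding wfg_def by blast
  show "e \<subseteq> fst (fst K - {v}, {e \<in> snd K. v \<notin> e} \<union> {{u, w} |w. {v, w} \<in> snd K \<and> w \<noteq> u}) \<and> card e = 2"
  proof (cases "e \<in> snd K \<and> v \<notin> e")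
    case True
    thus ?thesis using assms(1) unfolding wfg_def by auto
  next
    case False
    then obtain w where w: "e = {u,w}" "{v,w} \<in> snd K" "w \<noteq> u" using e by auto
    have "w \<in> fst K" "card {v,w} = 2" using w(2) assms(1) unfolding wfg_def by auto
    hence "w \<noteq> v" by auto
    thus ?thesis using w uK \<open>w \<in> fst K\<close> assms(3) by auto
  qed
qed

definition cinv :: "'a graph \<Rightarrow> 'b graph \<Rightarrow> ('a \<Rightarrow> 'b) \<Rightarrow> bool" where
  "cinv G K r \<longleftrightarrow> (\<forall>x\<in>fst G. r x \<in> fst K) \<and> (\<forall>k\<in>fst K. \<exists>x\<in>fst G. r x = k)
     \<and> (\<forall>k\<in>fst K. conn G {x\<in>fst G. r x = k})
     \<and> (\<forall>k1\<in>fst K. \<forall>k2\<in>fst K. k1 \<noteq> k2 \<longrightarrow> ({k1,k2} \<in> snd K \<longleftrightarrow> (\<exists>a b. {a,b} \<in> snd G \<and> r a = k1 \<and> r b = k2)))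
     \<and> wfg K"

lemma inv_refl: "wfg G \<Longrightarrow> cinv G G id"
  unfolding cinv_def by (auto intro: conn_sub_single)

lemma ex_edge_sym: "(\<exists>a b. {a,b} \<in> E \<and> P a \<and> Q b) \<longleftrightarrow> (\<exists>a b. {a,b} \<in> E \<and> Q a \<and> P b)"
  by (metis insert_commute)

lemma inv_step:
  assumes inv: "cinv G K r" and uv: "{u,v} \<in> snd K" "u \<noteq> v" and wG: "wfg G"
  shows "cinv G (contract_edge K u v) (\<lambda>x. if r x = v then u else r x)"
proof -
  let ?r = "\<lambda>x. if r x = v then u else r x"
  let ?K = "contract_edge K u v"
  have a: "\<forall>x\<in>fst G. r x \<in> fst K" and b: "\<forall>k\<in>fst K. \<exists>x\<in>fst G. r x = k"
    and c: "\<forall>k\<in>fst K. conn G {x\<in>fst G. r x = k}"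
    and d: "\<And>k1 k2. k1\<in>fst K \<Longrightarrow> k2\<in>fst K \<Longrightarrow> k1 \<noteq> k2 \<Longrightarrow> ({k1,k2} \<in> snd K \<longleftrightarrow> (\<exists>a b. {a,b} \<in> snd G \<and> r a = k1 \<and> r b = k2))"
    and wK: "wfg K" using inv unfolding cinv_def by auto
  have uK: "u \<in> fst K" and vK: "v \<in> fst K" using wK uv unfolding wfg_def by auto
  have fK: "fst ?K = fst K - {v}" unfolding contract_edge_def by simp
  have sK: "snd ?K = {e \<in> snd K. v \<notin> e} \<union> {{u, w} |w. {v, w} \<in> snd K \<and> w \<noteq> u}"
    unfolding contract_edge_def by simp
  have A: "\<forall>x\<in>fst G. ?r x \<in> fst ?K" using a uK uv(2) fK by auto
  have B: "\<forall>k\<in>fst ?K. \<exists>x\<in>fst G. ?r x = k" using b fK by fastforce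
  have C: "\<forall>k\<in>fst ?K. conn G {x\<in>fst G. ?r x = k}"
  proof
    fix k assume k: "k \<in> fst ?K"
    show "conn G {x\<in>fst G. ?r x = k}"
    proof (cases "k = u")
      case True
      have eq: "{x\<in>fst G. ?r x = k} = {x\<in>fst G. r x = u} \<union> {x\<in>fst G. r x = v}"
        using True uv(2) by auto
      obtain a1 b1 where ab: "{a1,b1} \<in> snd G" "r a1 = u" "r b1 = v" using d[OF uK vK uv(2)] uv(1) by auto
      have "a1 \<in> fst G" "b1 \<in> fst G" using ab(1) wG unfolding wfg_def by auto
      thus ?thesis unfolding eq using conn_union[OF c[rule_format, OF uK] c[rule_format, OF vK]] ab by auto
    next
      case False
      have "k \<noteq> v" using k fK by auto
      hence eq: "{x\<in>fst G. ?r x = k} = {x\<in>fst G. r x = k}" using False by auto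
      show ?thesis unfolding eq using c k fK by auto
    qed
  qed
  have D: "\<forall>k1\<in>fst ?K. \<forall>k2\<in>fst ?K. k1 \<noteq> k2 \<longrightarrow> ({k1,k2} \<in> snd ?K \<longleftrightarrow> (\<exists>a b. {a,b} \<in> snd G \<and> ?r a = k1 \<and> ?r b = k2))"
  proof (intro ballI impI)
    fix k1 k2 assume k1: "k1 \<in> fst ?K" and k2: "k2 \<in> fst ?K" and ne: "k1 \<noteq> k2"
    have k1K: "k1 \<in> fst K" "k1 \<noteq> v" and k2K: "k2 \<in> fst K" "k2 \<noteq> v" using k1 k2 fK by auto
    have uc: "{k1,k2} \<in> snd ?K \<longleftrightarrow> (\<exists>a b. {a,b} \<in> snd G \<and> ?r a = k1 \<and> ?r b = k2)"
      if k1K: "k1 \<in> fst K" "k1 \<noteq> v" and k2K: "k2 \<in> fst K" "k2 \<noteq> v" and ne: "k1 \<noteq> k2" and u1: "k1 = u"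
      for k1 k2
    proof -
      have "{k1,k2} \<in> snd ?K \<longleftrightarrow> {u,k2} \<in> snd K \<or> {v,k2} \<in> snd K"
        unfolding sK using u1 ne k2K uv(2) by (auto simp: doubleton_eq_iff)
      also have "\<dots> \<longleftrightarrow> (\<exists>a b. {a,b} \<in> snd G \<and> r a = u \<and> r b = k2) \<or> (\<exists>a b. {a,b} \<in> snd G \<and> r a = v \<and> r b = k2)"
        using d[OF uK k2K(1)] d[OF vK k2K(1)] ne u1 k2K by auto
      also have "\<dots> \<longleftrightarrow> (\<exists>a b. {a,b} \<in> snd G \<and> ?r a = k1 \<and> ?r b = k2)"
        using u1 ne k2K uv(2) by auto
      finally show ?thesis .
    qed
    show "{k1,k2} \<in> snd ?K \<longleftrightarrow> (\<exists>a b. {a,b} \<in> snd G \<and> ?r a = k1 \<and> ?r b = k2)"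
    proof (cases "k1 = u")
      case True show ?thesis by (rule uc[OF k1K k2K ne True])
    next
      case F1: False
      show ?thesis
      proof (cases "k2 = u")
        case True
        have "{k1,k2} \<in> snd ?K \<longleftrightarrow> {k2,k1} \<in> snd ?K" by (simp add: insert_commute)
        also have "\<dots> \<longleftrightarrow> (\<exists>a b. {a,b} \<in> snd G \<and> ?r a = k2 \<and> ?r b = k1)"
          using uc[OF k2K k1K ne[symmetric] True] .
        also have "\<dots> \<longleftrightarrow> (\<exists>a b. {a,b} \<in> snd G \<and> ?r a = k1 \<and> ?r b = k2)"
          by (rule ex_edge_sym)
        finally show ?thesis .
      next
        case F2: False
        have "{k1,k2} \<in> snd ?K \<longleftrightarrow> {k1,k2} \<in> snd K"
          unfolding sK using F1 F2 k1K k2K by (auto simp: doubleton_eq_iff)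
        also have "\<dots> \<longleftrightarrow> (\<exists>a b. {a,b} \<in> snd G \<and> r a = k1 \<and> r b = k2)"
          using d[OF k1K(1) k2K(1) ne] .
        also have "\<dots> \<longleftrightarrow> (\<exists>a b. {a,b} \<in> snd G \<and> ?r a = k1 \<and> ?r b = k2)"
          using F1 F2 k1K k2K by auto
        finally show ?thesis .
      qed
    qed
  qed
  have E: "wfg ?K" using wf_contract[OF wK uv] .
  show ?thesis unfolding cinv_def using A B C D E by blast
qed

lemma contracts_inv:
  assumes "contracts_to G K" "wfg G"
  shows "\<exists>r. cinv G K r"
  using assms
proof (induction rule: contracts_to.induct)
  case refl thus ?case using inv_refl by blast
next
  case (step H u v)
  then obtain r where "cinv G H r" by blast
  from inv_step[OF this step.hyps(2,3) step.prems] show ?case by blast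
qed




lemma conn_contract:
  assumes c: "conn G X" and vX: "v \<in> X" and bX: "b \<in> X" and bv: "b \<noteq> v"
  shows "conn (contract_edge G b v) (X - {v})"
  unfolding conn_def
proof (intro allI impI)
  fix Y assume Y: "Y \<subseteq> X - {v}" "Y \<noteq> {}" "Y \<noteq> X - {v}"
  have sK: "snd (contract_edge G b v) = {e \<in> snd G. v \<notin> e} \<union> {{b, w} |w. {v, w} \<in> snd G \<and> w \<noteq> b}"
    unfolding contract_edge_def by simp
  define Y' where "Y' = (if b \<in> Y then insert v Y else Y)"
  have "Y' \<subseteq> X" "Y' \<noteq> {}" "Y' \<noteq> X" using Y vX unfolding Y'_def by auto
  then obtain a c where ac: "a \<in> Y'" "c \<in> X - Y'" "{a,c} \<in> snd G"
    using c unfolding conn_def by blast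
  show "\<exists>a\<in>Y. \<exists>c\<in>X - {v} - Y. {a,c} \<in> snd (contract_edge G b v)"
  proof (cases "a = v")
    case True
    hence bY: "b \<in> Y" and cv: "c \<noteq> v" using ac Y unfolding Y'_def by (auto split: if_splits)
    hence "c \<notin> Y" using ac unfolding Y'_def by auto
    hence "c \<noteq> b" using bY by auto
    hence "{b,c} \<in> snd (contract_edge G b v)" unfolding sK using ac True by auto
    thus ?thesis using bY \<open>c \<notin> Y\<close> cv ac by blast
  next
    case False
    show ?thesis
    proof (cases "c = v")
      case True
      hence bY: "b \<notin> Y" using ac unfolding Y'_def by (auto split: if_splits)
      have aY: "a \<in> Y" using ac False unfolding Y'_def by (auto split: if_splits)
      hence "a \<noteq> b" using bY by auto
      moreover have "{v,a} \<in> snd G" using ac True by (simp add: insert_commute)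
      ultimately have "{b,a} \<in> snd (contract_edge G b v)" unfolding sK by auto
      hence "{a,b} \<in> snd (contract_edge G b v)" by (simp add: insert_commute)
      thus ?thesis using aY bY bX bv by blast
    next
      case F2: False
      have "a \<in> Y" "c \<in> X - {v} - Y" using ac False F2 unfolding Y'_def by (auto split: if_splits)
      moreover have "{a,c} \<in> snd (contract_edge G b v)" unfolding sK using ac False F2 by auto
      ultimately show ?thesis by blast
    qed
  qed
qed

lemma conn_contract_out:
  assumes c: "conn G X" and vX: "v \<notin> X"
  shows "conn (contract_edge G b v) X"
  unfolding conn_def
proof (intro allI impI)
  fix Y assume Y: "Y \<subseteq> X" "Y \<noteq> {}" "Y \<noteq> X"
  then obtain a c where ac: "a \<in> Y" "c \<in> X - Y" "{a,c} \<in> snd G"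
    using c unfolding conn_def by blast
  have "{a,c} \<in> snd (contract_edge G b v)" unfolding contract_edge_def using ac Y vX by auto
  thus "\<exists>a\<in>Y. \<exists>c\<in>X - Y. {a,c} \<in> snd (contract_edge G b v)" using ac by blast
qed

definition quot :: "'a graph \<Rightarrow> ('a \<Rightarrow> 'a) \<Rightarrow> 'a graph" where
  "quot G \<rho> = (\<rho> ` fst G, {{\<rho> a, \<rho> c} | a c. {a,c} \<in> snd G \<and> \<rho> a \<noteq> \<rho> c})"

lemma quot_id:
  assumes "wfg G" "\<forall>x\<in>fst G. \<rho> x = x"
  shows "quot G \<rho> = G"
proof -
  have 1: "\<rho> ` fst G = fst G" using assms(2) by force
  have 2: "{{\<rho> a, \<rho> c} | a c. {a,c} \<in> snd G \<and> \<rho> a \<noteq> \<rho> c} = snd G"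
  proof (rule set_eqI, rule iffI)
    fix e assume "e \<in> {{\<rho> a, \<rho> c} | a c. {a,c} \<in> snd G \<and> \<rho> a \<noteq> \<rho> c}"
    then obtain a c where ac: "e = {\<rho> a, \<rho> c}" "{a,c} \<in> snd G" by blast
    have "a \<in> fst G" "c \<in> fst G" using ac(2) assms(1) unfolding wfg_def by auto
    thus "e \<in> snd G" using ac assms(2) by simp
  next
    fix e assume e: "e \<in> snd G"
    then obtain a c where ac: "e = {a,c}" "a \<noteq> c" using assms(1) unfolding wfg_def by (metis card_2_iff)
    have "a \<in> fst G" "c \<in> fst G" using ac e assms(1) unfolding wfg_def by auto
    thus "e \<in> {{\<rho> a, \<rho> c} | a c. {a,c} \<in> snd G \<and> \<rho> a \<noteq> \<rho> c}" using ac e assms(2) by force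
  qed
  show ?thesis unfolding quot_def 1 2 by simp
qed

lemma quot_contract:
  assumes "finite (fst G)" "wfg G" "\<forall>x\<in>fst G. \<rho> x \<in> fst G \<and> \<rho> (\<rho> x) = \<rho> x"
    "\<forall>x\<in>fst G. conn G {y\<in>fst G. \<rho> y = \<rho> x}"
  shows "contracts_to G (quot G \<rho>)"
  using assms
proof (induction "card (fst G)" arbitrary: G rule: less_induct)
  case less
  show ?case
  proof (cases "\<forall>x\<in>fst G. \<rho> x = x")
    case True
    thus ?thesis using quot_id[OF less.prems(2) True] contracts_to.refl by metis
  next
    case False
    then obtain v where v: "v \<in> fst G" "\<rho> v \<noteq> v" by blast
    define F where "F = {y\<in>fst G. \<rho> y = \<rho> v}"
    have vF: "v \<in> F" using v unfolding F_def by auto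
    have rvF: "\<rho> v \<in> F" using v less.prems(3) unfolding F_def by auto
    have cF: "conn G F" using less.prems(4) v unfolding F_def by auto
    have "{v} \<noteq> F" using rvF v by auto
    then obtain b where b: "b \<in> F" "b \<noteq> v" "{v,b} \<in> snd G"
      using cF vF unfolding conn_def by (metis Diff_iff empty_not_insert insert_subset singletonD subsetI)
    have bv: "{b,v} \<in> snd G" using b by (simp add: insert_commute)
    define G1 where "G1 = contract_edge G b v"
    have fG1: "fst G1 = fst G - {v}" unfolding G1_def contract_edge_def by simp
    have sG1: "snd G1 = {e \<in> snd G. v \<notin> e} \<union> {{b, w} |w. {v, w} \<in> snd G \<and> w \<noteq> b}"
      unfolding G1_def contract_edge_def by simp
    have notrep: "\<rho> x \<noteq> v" if "x \<in> fst G" for x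
      using that less.prems(3) v by metis
    have p1: "finite (fst G1)" using less.prems(1) fG1 by simp
    have p0: "card (fst G1) < card (fst G)" unfolding fG1 using card_Diff1_less[OF less.prems(1) v(1)] .
    have p2: "wfg G1" unfolding G1_def using wf_contract[OF less.prems(2) bv b(2)] .
    have p3: "\<forall>x\<in>fst G1. \<rho> x \<in> fst G1 \<and> \<rho> (\<rho> x) = \<rho> x" using less.prems(3) notrep fG1 by auto
    have p4: "\<forall>x\<in>fst G1. conn G1 {y\<in>fst G1. \<rho> y = \<rho> x}"
    proof
      fix x assume x: "x \<in> fst G1"
      show "conn G1 {y\<in>fst G1. \<rho> y = \<rho> x}"
      proof (cases "\<rho> x = \<rho> v")
        case True
        have eq: "{y\<in>fst G1. \<rho> y = \<rho> x} = F - {v}" using True fG1 unfolding F_def by auto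
        have "conn G1 (F - {v})" unfolding G1_def using conn_contract[OF cF vF b(1) b(2)] .
        thus ?thesis using eq by simp
      next
        case False
        have eq: "{y\<in>fst G1. \<rho> y = \<rho> x} = {y\<in>fst G. \<rho> y = \<rho> x}" unfolding fG1
        proof (rule set_eqI)
          fix y show "y \<in> {y \<in> fst G - {v}. \<rho> y = \<rho> x} \<longleftrightarrow> y \<in> {y\<in>fst G. \<rho> y = \<rho> x}"
            using False by (cases "y = v") auto
        qed
        have c0: "conn G {y\<in>fst G. \<rho> y = \<rho> x}" using less.prems(4) x fG1 by auto
        have "v \<notin> {y\<in>fst G. \<rho> y = \<rho> x}" using False by (metis (mono_tags, lifting) mem_Collect_eq)
        hence "conn G1 {y\<in>fst G. \<rho> y = \<rho> x}" unfolding G1_def by (rule conn_contract_out[OF c0])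
        thus ?thesis using eq by simp
      qed
    qed
    have IH: "contracts_to G1 (quot G1 \<rho>)" using less.hyps[OF p0 p1 p2 p3 p4] .
    have bF: "\<rho> b = \<rho> v" using b unfolding F_def by auto
    have q1: "\<rho> ` fst G1 = \<rho> ` fst G"
    proof
      show "\<rho> ` fst G1 \<subseteq> \<rho> ` fst G" using fG1 by auto
      show "\<rho> ` fst G \<subseteq> \<rho> ` fst G1"
      proof
        fix y assume "y \<in> \<rho> ` fst G"
        then obtain x where x: "x \<in> fst G" "y = \<rho> x" by blast
        show "y \<in> \<rho> ` fst G1"
        proof (cases "x = v")
          case True
          have "\<rho> v \<in> fst G1" "\<rho> (\<rho> v) = \<rho> v" using fG1 less.prems(3) v by auto
          thus ?thesis using x True by (metis image_eqI)
        next
          case False thus ?thesis using x fG1 by auto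
        qed
      qed
    qed
    have q2: "{{\<rho> a, \<rho> c} | a c. {a,c} \<in> snd G1 \<and> \<rho> a \<noteq> \<rho> c} = {{\<rho> a, \<rho> c} | a c. {a,c} \<in> snd G \<and> \<rho> a \<noteq> \<rho> c}"
    proof (rule set_eqI, rule iffI)
      fix e assume "e \<in> {{\<rho> a, \<rho> c} | a c. {a,c} \<in> snd G1 \<and> \<rho> a \<noteq> \<rho> c}"
      then obtain a c where ac: "e = {\<rho> a, \<rho> c}" "{a,c} \<in> snd G1" "\<rho> a \<noteq> \<rho> c" by blast
      show "e \<in> {{\<rho> a, \<rho> c} | a c. {a,c} \<in> snd G \<and> \<rho> a \<noteq> \<rho> c}"
      proof (cases "{a,c} \<in> snd G")
        case True thus ?thesis using ac by blast
      next
        case False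
        then obtain w where w: "{a,c} = {b,w}" "{v,w} \<in> snd G" using ac(2) sG1 by auto
        have "{\<rho> a, \<rho> c} = {\<rho> v, \<rho> w}" using w(1) bF by (auto simp: doubleton_eq_iff)
        moreover hence "\<rho> v \<noteq> \<rho> w" using ac(3) by (auto simp: doubleton_eq_iff)
        ultimately show ?thesis using ac(1) w(2) by blast
      qed
    next
      fix e assume "e \<in> {{\<rho> a, \<rho> c} | a c. {a,c} \<in> snd G \<and> \<rho> a \<noteq> \<rho> c}"
      then obtain a c where ac: "e = {\<rho> a, \<rho> c}" "{a,c} \<in> snd G" "\<rho> a \<noteq> \<rho> c" by blast
      show "e \<in> {{\<rho> a, \<rho> c} | a c. {a,c} \<in> snd G1 \<and> \<rho> a \<noteq> \<rho> c}"
      proof (cases "a = v")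
        case True
        have "c \<noteq> b" using ac(3) True bF by auto
        hence "{b,c} \<in> snd G1" using sG1 ac(2) True by auto
        moreover have "e = {\<rho> b, \<rho> c}" "\<rho> b \<noteq> \<rho> c" using ac True bF by auto
        ultimately show ?thesis by blast
      next
        case F1: False
        show ?thesis
        proof (cases "c = v")
          case True
          have "a \<noteq> b" using ac(3) True bF by auto
          moreover have "{v,a} \<in> snd G" using ac(2) True by (simp add: insert_commute)
          ultimately have "{b,a} \<in> snd G1" using sG1 by auto
          hence "{a,b} \<in> snd G1" by (simp add: insert_commute)
          moreover have "e = {\<rho> a, \<rho> b}" "\<rho> a \<noteq> \<rho> b" using ac True bF by auto
          ultimately show ?thesis by blast
        next
          case False
          hence "{a,c} \<in> snd G1" using sG1 ac(2) F1 by auto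
          thus ?thesis using ac by blast
        qed
      qed
    qed
    have "quot G1 \<rho> = quot G \<rho>" unfolding quot_def q1 q2 ..
    moreover have "contracts_to G G1" unfolding G1_def using contracts_to.step[OF contracts_to.refl bv b(2)] .
    ultimately show ?thesis using IH contracts_to_trans by metis
  qed
qed

lemma quot_iso:
  assumes fin: "finite (fst G)" and wf: "wfg G" and L: "\<phi> ` fst G = L"
    and rep: "\<forall>i\<in>L. rep i \<in> fst G \<and> \<phi> (rep i) = i"
    and cn: "\<forall>i\<in>L. conn G {x\<in>fst G. \<phi> x = i}"
  shows "has_contraction G (L, {{\<phi> a, \<phi> c} | a c. {a,c} \<in> snd G \<and> \<phi> a \<noteq> \<phi> c})"
proof -
  define \<rho> where "\<rho> = rep \<circ> \<phi>"
  have r1: "\<forall>x\<in>fst G. \<rho> x \<in> fst G \<and> \<rho> (\<rho> x) = \<rho> x" using rep L unfolding \<rho>_def by auto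
  have r2: "\<forall>x\<in>fst G. conn G {y\<in>fst G. \<rho> y = \<rho> x}"
  proof
    fix x assume x: "x \<in> fst G"
    have "{y\<in>fst G. \<rho> y = \<rho> x} = {y\<in>fst G. \<phi> y = \<phi> x}"
      using rep L x unfolding \<rho>_def by (auto, metis imageI)
    thus "conn G {y\<in>fst G. \<rho> y = \<rho> x}" using cn L x by auto
  qed
  have ct: "contracts_to G (quot G \<rho>)" using quot_contract[OF fin wf r1 r2] .
  have rinj: "rep i = rep j \<longleftrightarrow> i = j" if "i \<in> L" "j \<in> L" for i j using rep that by metis
  have pr: "\<phi> (\<rho> x) = \<phi> x" if "x \<in> fst G" for x using rep L that unfolding \<rho>_def by auto
  have im: "\<phi> ` fst (quot G \<rho>) = L"
  proof -
    have "\<phi> ` fst (quot G \<rho>) = (\<phi> \<circ> \<rho>) ` fst G" unfolding quot_def by (simp add: image_comp)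
    also have "\<dots> = \<phi> ` fst G" by (rule image_cong) (use pr in auto)
    finally show ?thesis using L by simp
  qed
  have inj: "inj_on \<phi> (fst (quot G \<rho>))"
  proof (rule inj_onI)
    fix x y assume "x \<in> fst (quot G \<rho>)" "y \<in> fst (quot G \<rho>)" "\<phi> x = \<phi> y"
    then obtain a c where "a \<in> fst G" "c \<in> fst G" "x = \<rho> a" "y = \<rho> c" "\<phi> x = \<phi> y" unfolding quot_def by auto
    thus "x = y" using pr unfolding \<rho>_def by auto
  qed
  have bij: "bij_betw \<phi> (fst (quot G \<rho>)) L" unfolding bij_betw_def using inj im by simp
  have edges: "{x,y} \<in> snd (quot G \<rho>) \<longleftrightarrow> {\<phi> x, \<phi> y} \<in> {{\<phi> a, \<phi> c} | a c. {a,c} \<in> snd G \<and> \<phi> a \<noteq> \<phi> c}"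
    if xq: "x \<in> fst (quot G \<rho>)" and yq: "y \<in> fst (quot G \<rho>)" for x y
  proof -
    obtain a c where "a \<in> fst G" "c \<in> fst G" "x = rep (\<phi> a)" "y = rep (\<phi> c)"
      using xq yq unfolding quot_def \<rho>_def by auto
    then obtain i j where ij: "i \<in> L" "j \<in> L" "x = rep i" "y = rep j" using L by blast
    have px: "\<phi> x = i" "\<phi> y = j" using ij rep by auto
    have "{x,y} \<in> snd (quot G \<rho>) \<longleftrightarrow> (\<exists>a c. {rep i, rep j} = {rep (\<phi> a), rep (\<phi> c)} \<and> {a,c} \<in> snd G \<and> rep (\<phi> a) \<noteq> rep (\<phi> c))"
      unfolding quot_def \<rho>_def using ij by auto
    also have "\<dots> \<longleftrightarrow> (\<exists>a c. {i, j} = {\<phi> a, \<phi> c} \<and> {a,c} \<in> snd G \<and> \<phi> a \<noteq> \<phi> c)"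
    proof -
      have "{rep i, rep j} = {rep (\<phi> a), rep (\<phi> c)} \<and> {a,c} \<in> snd G \<and> rep (\<phi> a) \<noteq> rep (\<phi> c) \<longleftrightarrow>
            {i, j} = {\<phi> a, \<phi> c} \<and> {a,c} \<in> snd G \<and> \<phi> a \<noteq> \<phi> c" for a c
      proof (cases "{a,c} \<in> snd G")
        case True
        hence "a \<in> fst G" "c \<in> fst G" using wf unfolding wfg_def by auto
        hence "\<phi> a \<in> L" "\<phi> c \<in> L" using L by auto
        thus ?thesis using rinj ij by (auto simp: doubleton_eq_iff)
      qed simp
      thus ?thesis by simp
    qed
    also have "\<dots> \<longleftrightarrow> {\<phi> x, \<phi> y} \<in> {{\<phi> a, \<phi> c} | a c. {a,c} \<in> snd G \<and> \<phi> a \<noteq> \<phi> c}"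
      using px by auto
    finally show ?thesis .
  qed
  have "graph_iso (quot G \<rho>) (L, {{\<phi> a, \<phi> c} | a c. {a,c} \<in> snd G \<and> \<phi> a \<noteq> \<phi> c})"
    unfolding graph_iso_def using bij edges by auto
  thus ?thesis unfolding has_contraction_def using ct by blast
qed




definition near :: "nat \<Rightarrow> nat \<Rightarrow> bool" where
 "near a b \<longleftrightarrow> a = b \<or> a = Suc b \<or> b = Suc a \<or> (a = 0 \<and> b = 5) \<or> (a = 5 \<and> b = 0)"

lemma less6: "(x::nat) < 6 \<longleftrightarrow> x = 0 \<or> x = 1 \<or> x = 2 \<or> x = 3 \<or> x = 4 \<or> x = 5" by arith

lemma near_refl: "near a a" unfolding near_def by simp
lemma near_sym: "near a b \<Longrightarrow> near b a" unfolding near_def by auto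

lemma ex_less6: "(\<exists>k<(6::nat). P k) \<longleftrightarrow> P 0 \<or> P 1 \<or> P 2 \<or> P 3 \<or> P 4 \<or> P 5"
  by (metis less6 zero_less_numeral one_less_numeral_iff semiring_norm(76) numeral_less_iff
      semiring_norm(68) semiring_norm(69) semiring_norm(74) semiring_norm(75) semiring_norm(79) semiring_norm(80) semiring_norm(81) num.distinct(1))

lemma near_C6: assumes "i < 6" "j < 6" "i \<noteq> j" shows "{i,j} \<in> snd C6 \<longleftrightarrow> near i j"
proof -
  have e: "{i,j} \<in> snd C6 \<longleftrightarrow> (\<exists>k<(6::nat). {i,j} = {k, (k+1) mod 6})" unfolding C6_def by auto
  have "i = 0 \<or> i = 1 \<or> i = 2 \<or> i = 3 \<or> i = 4 \<or> i = 5" "j = 0 \<or> j = 1 \<or> j = 2 \<or> j = 3 \<or> j = 4 \<or> j = 5"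
    using assms(1,2) less6 by blast+
  thus ?thesis unfolding e ex_less6 near_def using assms(3)
    by (elim disjE) (simp_all add: doubleton_eq_iff)
qed

lemma fst_C6: "fst C6 = {0..<6}" unfolding C6_def by simp



context
  fixes Q :: "'q set" and S :: "nat \<Rightarrow> 'q set" and n :: nat
begin

lemma VQv: "Qv q \<in> fst (G' Q S n) \<longleftrightarrow> q \<in> Q" unfolding G'_def by auto
lemma VSv: "Sv j \<in> fst (G' Q S n) \<longleftrightarrow> j \<in> {1..n}" unfolding G'_def by auto
lemma VSp: "Sp j \<in> fst (G' Q S n) \<longleftrightarrow> j \<in> {1..n}" unfolding G'_def by auto
lemma VQp: "Qp q j \<in> fst (G' Q S n) \<longleftrightarrow> j \<in> {1..n} \<and> q \<in> S j" unfolding G'_def by auto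
lemma Vspecial: "U1 \<in> fst (G' Q S n)" "Vv \<in> fst (G' Q S n)" "Xv \<in> fst (G' Q S n)" "Wv \<in> fst (G' Q S n)"
  unfolding G'_def by auto

lemma E_QpQ: "j \<in> {1..n} \<Longrightarrow> q \<in> S j \<Longrightarrow> {Qp q j, Qv q} \<in> snd (G' Q S n)" unfolding G'_def snd_conv by (rule UnI1, rule UnI1, rule UnI1, rule UnI1, rule UnI1, rule UnI1, rule UnI1) blast
lemma E_QpS: "j \<in> {1..n} \<Longrightarrow> q \<in> S j \<Longrightarrow> {Qp q j, Sv j} \<in> snd (G' Q S n)" unfolding G'_def snd_conv by (rule UnI1, rule UnI1, rule UnI1, rule UnI1, rule UnI1, rule UnI1, rule UnI2) blast
lemma E_QSp: "j \<in> {1..n} \<Longrightarrow> q \<in> S j \<Longrightarrow> {Qv q, Sp j} \<in> snd (G' Q S n)" unfolding G'_def snd_conv by (rule UnI1, rule UnI1, rule UnI1, rule UnI1, rule UnI1, rule UnI2) blast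
lemma E_SSp: "j \<in> {1..n} \<Longrightarrow> k \<in> {1..n} \<Longrightarrow> {Sv j, Sp k} \<in> snd (G' Q S n)" unfolding G'_def snd_conv by (rule UnI1, rule UnI1, rule UnI1, rule UnI1, rule UnI2) blast
lemma E_US: "j \<in> {1..n} \<Longrightarrow> {U1, Sv j} \<in> snd (G' Q S n)" unfolding G'_def snd_conv by (rule UnI1, rule UnI1, rule UnI1, rule UnI2) blast
lemma E_UV: "{U1, Vv} \<in> snd (G' Q S n)" unfolding G'_def snd_conv by (rule UnI1, rule UnI1, rule UnI2) blast
lemma E_WSp: "j \<in> {1..n} \<Longrightarrow> {Wv, Sp j} \<in> snd (G' Q S n)" unfolding G'_def snd_conv by (rule UnI1, rule UnI2) blast
lemma E_XV: "{Xv, Vv} \<in> snd (G' Q S n)" unfolding G'_def snd_conv by (rule UnI2) blast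
lemma E_XW: "{Xv, Wv} \<in> snd (G' Q S n)" unfolding G'_def snd_conv by (rule UnI2) blast

lemma N_U1: "{U1, b} \<in> snd (G' Q S n) \<Longrightarrow> b = Vv \<or> (\<exists>j\<in>{1..n}. b = Sv j)"
  unfolding G'_def snd_conv by (auto simp: doubleton_eq_iff)
lemma N_Vv: "{Vv, b} \<in> snd (G' Q S n) \<Longrightarrow> b = U1 \<or> b = Xv"
  unfolding G'_def snd_conv by (auto simp: doubleton_eq_iff)
lemma N_Xv: "{Xv, b} \<in> snd (G' Q S n) \<Longrightarrow> b = Vv \<or> b = Wv"
  unfolding G'_def snd_conv by (auto simp: doubleton_eq_iff)
lemma N_Wv: "{Wv, b} \<in> snd (G' Q S n) \<Longrightarrow> b = Xv \<or> (\<exists>j\<in>{1..n}. b = Sp j)"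
  unfolding G'_def snd_conv by (auto simp: doubleton_eq_iff)
lemma N_Sv: "{Sv j, b} \<in> snd (G' Q S n) \<Longrightarrow> b = U1 \<or> (\<exists>k\<in>{1..n}. b = Sp k) \<or> (\<exists>q\<in>S j. b = Qp q j)"
  unfolding G'_def snd_conv by (auto simp: doubleton_eq_iff)
lemma N_Sp: "{Sp j, b} \<in> snd (G' Q S n) \<Longrightarrow> b = Wv \<or> (\<exists>k\<in>{1..n}. b = Sv k) \<or> (\<exists>q\<in>S j. b = Qv q)"
  unfolding G'_def snd_conv by (auto simp: doubleton_eq_iff)
lemma N_Qp: "{Qp q j, b} \<in> snd (G' Q S n) \<Longrightarrow> b = Qv q \<or> b = Sv j"
  unfolding G'_def snd_conv by (auto simp: doubleton_eq_iff)

lemma wfG': assumes SQ: "\<forall>j\<in>{1..n}. S j \<subseteq> Q" shows "wfg (G' Q S n)"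
  unfolding wfg_def
proof
  fix e assume e: "e \<in> snd (G' Q S n)"
  have QQ: "q \<in> Q" if "j \<in> {1..n}" "q \<in> S j" for q j using SQ that by blast
  from e[unfolded G'_def snd_conv] show "e \<subseteq> fst (G' Q S n) \<and> card e = 2"
  proof (elim UnE)
    assume "e \<in> {{Qp q j, Qv q} |q j. j \<in> {1..n} \<and> q \<in> S j}"
    then obtain q j where "j \<in> {1..n}" "q \<in> S j" "e = {Qp q j, Qv q}" by blast
    thus ?thesis using QQ[of j q] VQp[of q j] VQv[of q] by simp
  next
    assume "e \<in> {{Qp q j, Sv j} |q j. j \<in> {1..n} \<and> q \<in> S j}"
    then obtain q j where "j \<in> {1..n}" "q \<in> S j" "e = {Qp q j, Sv j}" by blast
    thus ?thesis using VQp[of q j] VSv[of j] by simp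
  next
    assume "e \<in> {{Qv q, Sp j} |q j. j \<in> {1..n} \<and> q \<in> S j}"
    then obtain q j where "j \<in> {1..n}" "q \<in> S j" "e = {Qv q, Sp j}" by blast
    thus ?thesis using QQ[of j q] VSp[of j] VQv[of q] by simp
  next
    assume "e \<in> {{Sv j, Sp k} |j k. j \<in> {1..n} \<and> k \<in> {1..n}}"
    then obtain j k where "j \<in> {1..n}" "k \<in> {1..n}" "e = {Sv j, Sp k}" by blast
    thus ?thesis using VSv[of j] VSp[of k] by simp
  next
    assume "e \<in> {{U1, Sv j} |j. j \<in> {1..n}}"
    then obtain j where "j \<in> {1..n}" "e = {U1, Sv j}" by blast
    thus ?thesis using VSv[of j] Vspecial by simp
  next
    assume "e \<in> {{U1, Vv}}"
    thus ?thesis using Vspecial by simp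
  next
    assume "e \<in> {{Wv, Sp j} |j. j \<in> {1..n}}"
    then obtain j where "j \<in> {1..n}" "e = {Wv, Sp j}" by blast
    thus ?thesis using VSp[of j] Vspecial by simp
  next
    assume "e \<in> {{Xv, Vv}, {Xv, Wv}}"
    thus ?thesis using Vspecial by auto
  qed
qed

lemma finG': assumes fQ: "finite Q" and SQ: "\<forall>j\<in>{1..n}. S j \<subseteq> Q" shows "finite (fst (G' Q S n))"
proof -
  have sub: "{Qp q j | q j. j \<in> {1..n} \<and> q \<in> S j} \<subseteq> (\<lambda>(q,j). Qp q j) ` (Q \<times> {1..n})"
  proof
    fix x assume "x \<in> {Qp q j | q j. j \<in> {1..n} \<and> q \<in> S j}"
    then obtain q j where qj: "x = Qp q j" "j \<in> {1..n}" "q \<in> S j" by blast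
    hence "(q,j) \<in> Q \<times> {1..n}" using SQ by auto
    thus "x \<in> (\<lambda>(q,j). Qp q j) ` (Q \<times> {1..n})" using qj by force
  qed
  have "finite {Qp q j | q j. j \<in> {1..n} \<and> q \<in> S j}" using finite_subset[OF sub] fQ by simp
  thus ?thesis unfolding G'_def using fQ by simp
qed


end



lemma modfacts1: "s < 6 \<Longrightarrow> near s ((s+1) mod 6) \<and> near s ((s+5) mod 6) \<and> (s+1) mod 6 \<noteq> s \<and> (s+5) mod 6 \<noteq> s \<and> (s+1) mod 6 \<noteq> (s+5) mod 6 \<and> (s+1) mod 6 < 6 \<and> (s+5) mod 6 < 6"
  apply (subgoal_tac "s=0 \<or> s=1 \<or> s=2 \<or> s=3 \<or> s=4 \<or> s=5")
   apply (elim disjE; simp only:; simp; unfold near_def; arith)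
  by arith

lemma P1: "s < 6 \<Longrightarrow> z < 6 \<Longrightarrow> near s z \<Longrightarrow> near ((s+2) mod 6) z \<Longrightarrow> z = (s+1) mod 6"
  apply (subgoal_tac "s=0 \<or> s=1 \<or> s=2 \<or> s=3 \<or> s=4 \<or> s=5")
   apply (elim disjE; simp only:; simp; unfold near_def; arith)
  by arith

lemma P2: "s < 6 \<Longrightarrow> y < 6 \<Longrightarrow> near y ((s+1) mod 6) \<Longrightarrow> \<not> near ((s+4) mod 6) y"
  apply (subgoal_tac "s=0 \<or> s=1 \<or> s=2 \<or> s=3 \<or> s=4 \<or> s=5")
   apply (elim disjE; simp only:; simp; unfold near_def; arith)
  by arith

lemma P1b: "s < 6 \<Longrightarrow> z < 6 \<Longrightarrow> near s z \<Longrightarrow> near ((s+4) mod 6) z \<Longrightarrow> z = (s+5) mod 6"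
  apply (subgoal_tac "s=0 \<or> s=1 \<or> s=2 \<or> s=3 \<or> s=4 \<or> s=5")
   apply (elim disjE; simp only:; simp; unfold near_def; arith)
  by arith

lemma P2b: "s < 6 \<Longrightarrow> y < 6 \<Longrightarrow> near y ((s+5) mod 6) \<Longrightarrow> \<not> near ((s+2) mod 6) y"
  apply (subgoal_tac "s=0 \<or> s=1 \<or> s=2 \<or> s=3 \<or> s=4 \<or> s=5")
   apply (elim disjE; simp only:; simp; unfold near_def; arith)
  by arith

lemma P3: "s < 6 \<Longrightarrow> y < 6 \<Longrightarrow> near s y \<Longrightarrow> \<not> near ((s+3) mod 6) y"
  apply (subgoal_tac "s=0 \<or> s=1 \<or> s=2 \<or> s=3 \<or> s=4 \<or> s=5")
   apply (elim disjE; simp only:; simp; unfold near_def; arith)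
  by arith

lemma P4: "s < 6 \<Longrightarrow> y < 6 \<Longrightarrow> t < 6 \<Longrightarrow> near y t \<Longrightarrow> near s t \<Longrightarrow> y \<noteq> (s+2) mod 6 \<Longrightarrow> y \<noteq> (s+4) mod 6 \<Longrightarrow> \<not> near ((s+3) mod 6) y"
  apply (subgoal_tac "s=0 \<or> s=1 \<or> s=2 \<or> s=3 \<or> s=4 \<or> s=5")
   apply (elim disjE; simp only:; simp; unfold near_def; arith)
  by arith

lemma P5: "(s::nat) < 6 \<Longrightarrow> (s+2) mod 6 < 6 \<and> (s+3) mod 6 < 6 \<and> (s+4) mod 6 < 6"
  apply (subgoal_tac "s=0 \<or> s=1 \<or> s=2 \<or> s=3 \<or> s=4 \<or> s=5")
   apply (elim disjE; simp only:; simp; unfold near_def; arith)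
  by arith

lemma step1:
  assumes A: "PA s" and B: "PB t" and AB: "\<forall>y z. PA y \<longrightarrow> PB z \<longrightarrow> near y z"
    and lt: "\<forall>y. PA y \<or> PB y \<longrightarrow> y < 6"
  shows "\<exists>i<6. \<forall>y. PA y \<or> PB y \<longrightarrow> \<not> near i y"
proof -
  have s6: "s < 6" and t6: "t < 6" using A B lt by auto
  have Bs: "near s z" if "PB z" for z using AB A that by blast
  have At: "near y t" if "PA y" for y using AB B that by blast
  show ?thesis
  proof (cases "PA ((s+2) mod 6)")
    case True
    have Bz: "z = (s+1) mod 6" if "PB z" for z
      using P1[OF s6 _ Bs[OF that]] AB True that lt by blast
    have "\<forall>y. PA y \<or> PB y \<longrightarrow> \<not> near ((s+4) mod 6) y"
    proof (intro allI impI)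
      fix y assume y: "PA y \<or> PB y"
      show "\<not> near ((s+4) mod 6) y"
      proof (cases "PA y")
        case True
        have "near y ((s+1) mod 6)" using At[OF True] Bz[OF B] by simp
        thus ?thesis using P2 s6 lt True by blast
      next
        case False
        hence "y = (s+1) mod 6" using Bz y by blast
        moreover have "near ((s+1) mod 6) ((s+1) mod 6)" by (rule near_refl)
        ultimately show ?thesis using P2[OF s6, of "(s+1) mod 6"] s6 by simp
      qed
    qed
    thus ?thesis using P5[OF s6] by blast
  next
    case F1: False
    show ?thesis
    proof (cases "PA ((s+4) mod 6)")
      case True
      have Bz: "z = (s+5) mod 6" if "PB z" for z
        using P1b[OF s6 _ Bs[OF that]] AB True that lt by blast
      have "\<forall>y. PA y \<or> PB y \<longrightarrow> \<not> near ((s+2) mod 6) y"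
      proof (intro allI impI)
        fix y assume y: "PA y \<or> PB y"
        show "\<not> near ((s+2) mod 6) y"
        proof (cases "PA y")
          case True
          have "near y ((s+5) mod 6)" using At[OF True] Bz[OF B] by simp
          thus ?thesis using P2b s6 lt True by blast
        next
          case False
          hence "y = (s+5) mod 6" using Bz y by blast
          moreover have "near ((s+5) mod 6) ((s+5) mod 6)" by (rule near_refl)
          ultimately show ?thesis using P2b[OF s6, of "(s+5) mod 6"] s6 by simp
        qed
      qed
      thus ?thesis using P5[OF s6] by blast
    next
      case F2: False
      have "\<forall>y. PA y \<or> PB y \<longrightarrow> \<not> near ((s+3) mod 6) y"
      proof (intro allI impI)
        fix y assume y: "PA y \<or> PB y"
        show "\<not> near ((s+3) mod 6) y"
        proof (cases "PA y")
          case True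
          have "y \<noteq> (s+2) mod 6" "y \<noteq> (s+4) mod 6" using F1 F2 True by auto
          thus ?thesis using P4[OF s6 _ t6 At[OF True] Bs[OF B]] lt True by blast
        next
          case False
          hence "PB y" using y by blast
          thus ?thesis using P3[OF s6 _ Bs] lt by blast
        qed
      qed
      thus ?thesis using P5[OF s6] by blast
    qed
  qed
qed



definition path4 :: "nat \<Rightarrow> nat \<Rightarrow> nat \<Rightarrow> nat \<Rightarrow> bool" where
  "path4 a b c d \<longleftrightarrow> near a b \<and> near b c \<and> near c d \<and> a \<noteq> b \<and> a \<noteq> c \<and> a \<noteq> d \<and> b \<noteq> c \<and> b \<noteq> d \<and> c \<noteq> d
     \<and> a < 6 \<and> b < 6 \<and> c < 6 \<and> d < 6"
lemma split6: "(x::nat) < 6 \<Longrightarrow> (x = 0 \<Longrightarrow> P) \<Longrightarrow> (x = 1 \<Longrightarrow> P) \<Longrightarrow> (x = 2 \<Longrightarrow> P) \<Longrightarrow> (x = 3 \<Longrightarrow> P) \<Longrightarrow> (x = 4 \<Longrightarrow> P) \<Longrightarrow> (x = 5 \<Longrightarrow> P) \<Longrightarrow> P"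
  unfolding less6 by blast
lemma near_tab: "near 0 0" "near 0 1" "near 0 (Suc 0)" "\<not> near 0 2" "\<not> near 0 3" "\<not> near 0 4" "near 0 5" "near 1 0" "near (Suc 0) 0" "near 1 1" "near 1 (Suc 0)" "near (Suc 0) 1" "near (Suc 0) (Suc 0)" "near 1 2" "near (Suc 0) 2" "\<not> near 1 3" "\<not> near (Suc 0) 3" "\<not> near 1 4" "\<not> near (Suc 0) 4" "\<not> near 1 5" "\<not> near (Suc 0) 5" "\<not> near 2 0" "near 2 1" "near 2 (Suc 0)" "near 2 2" "near 2 3" "\<not> near 2 4" "\<not> near 2 5" "\<not> near 3 0" "\<not> near 3 1" "\<not> near 3 (Suc 0)" "near 3 2" "near 3 3" "near 3 4" "\<not> near 3 5" "\<not> near 4 0" "\<not> near 4 1" "\<not> near 4 (Suc 0)" "\<not> near 4 2" "near 4 3" "near 4 4" "near 4 5" "near 5 0" "\<not> near 5 1" "\<not> near 5 (Suc 0)" "\<not> near 5 2" "\<not> near 5 3" "near 5 4" "near 5 5"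
  by (simp_all add: near_def)


lemma Lpath: "near pu pv \<Longrightarrow> near pv px \<Longrightarrow> near px pw \<Longrightarrow> near pu s \<Longrightarrow> near pw t \<Longrightarrow> near s t \<Longrightarrow> s \<noteq> i \<Longrightarrow> t \<noteq> i \<Longrightarrow> pu \<noteq> i \<Longrightarrow> pw \<noteq> i \<Longrightarrow> pv = i \<or> px = i \<Longrightarrow> j1 \<noteq> i \<Longrightarrow> j5 \<noteq> i \<Longrightarrow> j1 \<noteq> j5 \<Longrightarrow> near i j1 \<Longrightarrow> near i j5 \<Longrightarrow> (pv = i \<and> (pu = j1 \<or> px = j1)) \<or> (px = i \<and> (pv = j1 \<or> pw = j1)) \<Longrightarrow> (pv = i \<and> (pu = j5 \<or> px = j5)) \<or> (px = i \<and> (pv = j5 \<or> pw = j5)) \<Longrightarrow> i < 6 \<Longrightarrow> pu < 6 \<Longrightarrow> pv < 6 \<Longrightarrow> px < 6 \<Longrightarrow> pw < 6 \<Longrightarrow> s < 6 \<Longrightarrow> t < 6 \<Longrightarrow> j1 < 6 \<Longrightarrow> j5 < 6 \<Longrightarrow> path4 pu pv px pw"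
  unfolding path4_def
  by (rule split6[of i]; (simp add: near_tab)?; rule split6[of pv]; (simp add: near_tab)?; rule split6[of px]; (simp add: near_tab)?; rule split6[of pu]; (simp add: near_tab)?; rule split6[of pw]; (simp add: near_tab)?; rule split6[of s]; (simp add: near_tab)?; rule split6[of t]; (simp add: near_tab)?; rule split6[of j1]; (simp add: near_tab)?; rule split6[of j5]; (simp add: near_tab)?)

lemma LS: "path4 a b c d \<Longrightarrow> near a s \<Longrightarrow> near d t \<Longrightarrow> near s t \<Longrightarrow> s < 6 \<Longrightarrow> t < 6 \<Longrightarrow>
   (s = b \<and> t = c) \<or> (s \<noteq> a \<and> s \<noteq> b \<and> s \<noteq> c \<and> s \<noteq> d \<and> t \<noteq> a \<and> t \<noteq> b \<and> t \<noteq> c \<and> t \<noteq> d \<and> s \<noteq> t)"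
  unfolding path4_def
  by (rule split6[of a]; (simp add: near_tab)?; rule split6[of b]; (simp add: near_tab)?; rule split6[of c]; (simp add: near_tab)?; rule split6[of d]; (simp add: near_tab)?; rule split6[of s]; (simp add: near_tab)?; rule split6[of t]; (simp add: near_tab)?)

lemma Lmiss: "path4 a b c d \<Longrightarrow> (\<And>y. y < 6 \<Longrightarrow> near b y \<or> near c y \<or> y = a \<or> y = d) \<Longrightarrow> False"
proof -
  assume p: "path4 a b c d" and h: "\<And>y. y < 6 \<Longrightarrow> near b y \<or> near c y \<or> y = a \<or> y = d"
  have "near b 0 \<or> near c 0 \<or> 0 = a \<or> 0 = d" "near b 1 \<or> near c 1 \<or> 1 = a \<or> 1 = d"
    "near b 2 \<or> near c 2 \<or> 2 = a \<or> 2 = d" "near b 3 \<or> near c 3 \<or> 3 = a \<or> 3 = d"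
    "near b 4 \<or> near c 4 \<or> 4 = a \<or> 4 = d" "near b 5 \<or> near c 5 \<or> 5 = a \<or> 5 = d"
    using h[of 0] h[of 1] h[of 2] h[of 3] h[of 4] h[of 5] by simp_all
  thus False using p unfolding path4_def
  apply -
  by (rule split6[of a]; (simp add: near_tab)?; rule split6[of b]; (simp add: near_tab)?; rule split6[of c]; (simp add: near_tab)?; rule split6[of d]; (simp add: near_tab)?)
qed

lemma LU: "path4 a b c d \<Longrightarrow> near a y \<Longrightarrow> y \<noteq> a \<Longrightarrow> y \<noteq> b \<Longrightarrow> near a s \<Longrightarrow> s \<noteq> a \<Longrightarrow> s \<noteq> b \<Longrightarrow> y < 6 \<Longrightarrow> s < 6 \<Longrightarrow> y = s"
  unfolding path4_def
  by (rule split6[of a]; (simp add: near_tab)?; rule split6[of b]; (simp add: near_tab)?; rule split6[of c]; (simp add: near_tab)?; rule split6[of d]; (simp add: near_tab)?; rule split6[of y]; (simp add: near_tab)?; rule split6[of s]; (simp add: near_tab)?)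

lemma LW: "path4 a b c d \<Longrightarrow> near d y \<Longrightarrow> y \<noteq> d \<Longrightarrow> y \<noteq> c \<Longrightarrow> near d s \<Longrightarrow> s \<noteq> d \<Longrightarrow> s \<noteq> c \<Longrightarrow> y < 6 \<Longrightarrow> s < 6 \<Longrightarrow> y = s"
  unfolding path4_def
  by (rule split6[of a]; (simp add: near_tab)?; rule split6[of b]; (simp add: near_tab)?; rule split6[of c]; (simp add: near_tab)?; rule split6[of d]; (simp add: near_tab)?; rule split6[of y]; (simp add: near_tab)?; rule split6[of s]; (simp add: near_tab)?)

lemma LB: "path4 a b c d \<Longrightarrow> near a al \<Longrightarrow> near d be \<Longrightarrow> near al be \<Longrightarrow> al \<notin> {a,b,c,d} \<Longrightarrow> be \<notin> {a,b,c,d} \<Longrightarrow> al \<noteq> be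
   \<Longrightarrow> al < 6 \<Longrightarrow> be < 6 \<Longrightarrow> y < 6 \<Longrightarrow> near be y \<Longrightarrow> y \<noteq> d \<Longrightarrow> y = al \<or> y = be"
  unfolding path4_def
  by (rule split6[of a]; (simp add: near_tab)?; rule split6[of b]; (simp add: near_tab)?; rule split6[of c]; (simp add: near_tab)?; rule split6[of d]; (simp add: near_tab)?; rule split6[of al]; (simp add: near_tab)?; rule split6[of be]; (simp add: near_tab)?; rule split6[of y]; (simp add: near_tab)?)

lemma LA: "path4 a b c d \<Longrightarrow> near a al \<Longrightarrow> near d be \<Longrightarrow> near al be \<Longrightarrow> al \<notin> {a,b,c,d} \<Longrightarrow> be \<notin> {a,b,c,d} \<Longrightarrow> al \<noteq> be
   \<Longrightarrow> al < 6 \<Longrightarrow> be < 6 \<Longrightarrow> y < 6 \<Longrightarrow> near al y \<Longrightarrow> y \<noteq> a \<Longrightarrow> y = al \<or> y = be"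
  unfolding path4_def
  by (rule split6[of a]; (simp add: near_tab)?; rule split6[of b]; (simp add: near_tab)?; rule split6[of c]; (simp add: near_tab)?; rule split6[of d]; (simp add: near_tab)?; rule split6[of al]; (simp add: near_tab)?; rule split6[of be]; (simp add: near_tab)?; rule split6[of y]; (simp add: near_tab)?)




context
  fixes Q :: "'q set" and S :: "nat \<Rightarrow> 'q set" and n :: nat and \<phi> :: "'q vtx \<Rightarrow> nat"
  assumes n2: "n \<ge> 2" and SQ: "\<forall>j\<in>{1..n}. S j \<noteq> {} \<and> S j \<subseteq> Q" and Sn: "S n = Q"
    and H1: "\<forall>x\<in>fst (G' Q S n). \<phi> x < 6"
    and H2: "\<forall>i<6. \<exists>x\<in>fst (G' Q S n). \<phi> x = i"
    and H3: "\<forall>a b. {a,b} \<in> snd (G' Q S n) \<longrightarrow> near (\<phi> a) (\<phi> b)"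
    and H4: "\<forall>i j. i < 6 \<longrightarrow> j < 6 \<longrightarrow> i \<noteq> j \<longrightarrow> near i j \<longrightarrow> (\<exists>a b. {a,b} \<in> snd (G' Q S n) \<and> \<phi> a = i \<and> \<phi> b = j)"
    and H5: "\<forall>i<6. conn (G' Q S n) {x\<in>fst (G' Q S n). \<phi> x = i}"
begin

lemma in1: "1 \<in> {1..n}" and inn: "n \<in> {1..n}" and in2: "2 \<in> {1..n}" using n2 by auto

lemma SQj: "j \<in> {1..n} \<Longrightarrow> S j \<subseteq> Q" using SQ by auto

lemma wf: "wfg (G' Q S n)" using wfG' SQ by blast

lemma nE: "{a,b} \<in> snd (G' Q S n) \<Longrightarrow> near (\<phi> a) (\<phi> b)" using H3 by blast

lemma lt_Sv: "j \<in> {1..n} \<Longrightarrow> \<phi> (Sv j) < 6" using H1 VSv by blast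
lemma lt_Sp: "j \<in> {1..n} \<Longrightarrow> \<phi> (Sp j) < 6" using H1 VSp by blast
lemma lt_sp: "\<phi> U1 < 6" "\<phi> Vv < 6" "\<phi> Xv < 6" "\<phi> Wv < 6" using H1 Vspecial by blast+

lemma exists_i: "\<exists>i<6. \<forall>z\<in>fst (G' Q S n). \<phi> z = i \<longrightarrow> z = Vv \<or> z = Xv"
proof -
  let ?PA = "\<lambda>y. \<exists>j\<in>{1..n}. \<phi> (Sv j) = y"
  let ?PB = "\<lambda>y. \<exists>k\<in>{1..n}. \<phi> (Sp k) = y"
  have AB: "\<forall>y z. ?PA y \<longrightarrow> ?PB z \<longrightarrow> near y z" using nE E_SSp by blast
  have lt: "\<forall>y. ?PA y \<or> ?PB y \<longrightarrow> y < 6" using lt_Sv lt_Sp by blast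
  obtain i where i: "i < 6" "\<forall>y. ?PA y \<or> ?PB y \<longrightarrow> \<not> near i y"
    using step1[of ?PA "\<phi> (Sv 1)" ?PB "\<phi> (Sp 1)", OF _ _ AB lt] in1 by blast
  have "\<forall>z\<in>fst (G' Q S n). \<phi> z = i \<longrightarrow> z = Vv \<or> z = Xv"
  proof (intro ballI impI)
    fix z assume z: "z \<in> fst (G' Q S n)" and zi: "\<phi> z = i"
    show "z = Vv \<or> z = Xv"
    proof (cases z)
      case (Qv q)
      hence "q \<in> Q" using z by (simp add: VQv)
      hence "q \<in> S n" using Sn by simp
      hence "near i (\<phi> (Sp n))" using nE[OF E_QSp[OF inn]] Qv zi by blast
      thus ?thesis using i inn by blast
    next
      case (Sv j)
      hence "j \<in> {1..n}" using z by (simp add: VSv)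
      thus ?thesis using i Sv zi near_refl by blast
    next
      case (Sp j)
      hence "j \<in> {1..n}" using z by (simp add: VSp)
      thus ?thesis using i Sp zi near_refl by blast
    next
      case (Qp q j)
      hence "j \<in> {1..n}" "q \<in> S j" using z by (auto simp: VQp)
      hence "near i (\<phi> (Sv j))" using nE[OF E_QpS] Qp zi by blast
      thus ?thesis using i \<open>j \<in> {1..n}\<close> by blast
    next
      case U1
      hence "near i (\<phi> (Sv 1))" using nE[OF E_US[OF in1]] zi by blast
      thus ?thesis using i in1 by blast
    next
      case Wv
      hence "near (\<phi> (Sp 1)) i" using nE[OF E_WSp[OF in1]] zi near_sym by blast
      hence "near i (\<phi> (Sp 1))" using near_sym by blast
      thus ?thesis using i in1 by blast
    qed simp_all
  qed
  thus ?thesis using i by blast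
qed

lemma the_path: "path4 (\<phi> U1) (\<phi> Vv) (\<phi> Xv) (\<phi> Wv)"
proof -
  obtain i where i: "i < 6" "\<forall>z\<in>fst (G' Q S n). \<phi> z = i \<longrightarrow> z = Vv \<or> z = Xv" using exists_i by blast
  obtain z where z: "z \<in> fst (G' Q S n)" "\<phi> z = i" using H2 i by blast
  have pvx: "\<phi> Vv = i \<or> \<phi> Xv = i" using i(2) z by blast
  define j1 where "j1 = (i+1) mod 6"
  define j5 where "j5 = (i+5) mod 6"
  have m: "near i j1" "near i j5" "j1 \<noteq> i" "j5 \<noteq> i" "j1 \<noteq> j5" "j1 < 6" "j5 < 6"
    using modfacts1[OF i(1)] unfolding j1_def j5_def by auto
  have nb: "(\<phi> Vv = i \<and> (\<phi> U1 = j \<or> \<phi> Xv = j)) \<or> (\<phi> Xv = i \<and> (\<phi> Vv = j \<or> \<phi> Wv = j))"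
    if j6: "j < 6" and jne: "j \<noteq> i" and jn: "near i j" for j
  proof -
    obtain a b where ab: "{a,b} \<in> snd (G' Q S n)" "\<phi> a = i" "\<phi> b = j" using H4[rule_format, OF i(1) j6 jne[symmetric] jn] by blast
    have "a \<in> fst (G' Q S n)" using ab(1) wf unfolding wfg_def by auto
    hence "a = Vv \<or> a = Xv" using i(2) ab(2) by blast
    thus ?thesis
    proof
      assume "a = Vv" thus ?thesis using N_Vv ab by blast
    next
      assume "a = Xv" thus ?thesis using N_Xv ab by blast
    qed
  qed
  have mem: "Sv 1 \<in> fst (G' Q S n)" "Sp 1 \<in> fst (G' Q S n)" using in1 by (simp_all add: VSv VSp)
  have ne: "\<phi> (Sv 1) \<noteq> i" "\<phi> (Sp 1) \<noteq> i" "\<phi> U1 \<noteq> i" "\<phi> Wv \<noteq> i"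
    using i(2)[rule_format, OF mem(1)] i(2)[rule_format, OF mem(2)] i(2)[rule_format, OF Vspecial(1)]
      i(2)[rule_format, OF Vspecial(4)] by auto
  have nn: "near (\<phi> U1) (\<phi> Vv)" "near (\<phi> Vv) (\<phi> Xv)" "near (\<phi> Xv) (\<phi> Wv)"
    "near (\<phi> U1) (\<phi> (Sv 1))" "near (\<phi> Wv) (\<phi> (Sp 1))" "near (\<phi> (Sv 1)) (\<phi> (Sp 1))"
    using nE[OF E_UV] nE[OF E_XV] nE[OF E_XW] nE[OF E_US[OF in1]] nE[OF E_WSp[OF in1]]
      nE[OF E_SSp[OF in1 in1]] near_sym by blast+
  show ?thesis
    using Lpath[OF nn ne(1,2,3,4) pvx m(3,4,5,1,2) nb[OF m(6,3,1)] nb[OF m(7,4,2)] i(1) lt_sp(1,2,3,4)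
        lt_Sv[OF in1] lt_Sp[OF in1] m(6,7)] .
qed


lemma fiber_conn: "i < 6 \<Longrightarrow> Y \<subseteq> {x\<in>fst (G' Q S n). \<phi> x = i} \<Longrightarrow> Y \<noteq> {} \<Longrightarrow> Y \<noteq> {x\<in>fst (G' Q S n). \<phi> x = i}
   \<Longrightarrow> \<exists>a\<in>Y. \<exists>b\<in>{x\<in>fst (G' Q S n). \<phi> x = i} - Y. {a,b} \<in> snd (G' Q S n)"
  using H5 unfolding conn_def by blast

lemma colouring: "\<exists>Q1 Q2. two_colouring Q (S ` {1..n}) Q1 Q2"
proof -
  have P: "path4 (\<phi> U1) (\<phi> Vv) (\<phi> Xv) (\<phi> Wv)" by (rule the_path)
  hence Pd: "\<phi> U1 \<noteq> \<phi> Vv" "\<phi> U1 \<noteq> \<phi> Xv" "\<phi> U1 \<noteq> \<phi> Wv" "\<phi> Vv \<noteq> \<phi> Xv" "\<phi> Vv \<noteq> \<phi> Wv" "\<phi> Xv \<noteq> \<phi> Wv"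
    unfolding path4_def by auto
  have nUS: "near (\<phi> U1) (\<phi> (Sv j))" if "j \<in> {1..n}" for j using nE[OF E_US[OF that]] .
  have nWS: "near (\<phi> Wv) (\<phi> (Sp j))" if "j \<in> {1..n}" for j using nE[OF E_WSp[OF that]] .
  have nSS: "near (\<phi> (Sv j)) (\<phi> (Sp k))" if "j \<in> {1..n}" "k \<in> {1..n}" for j k using nE[OF E_SSp[OF that]] .
  have LSj: "(\<phi> (Sv j) = \<phi> Vv \<and> \<phi> (Sp k) = \<phi> Xv) \<or>
     (\<phi> (Sv j) \<noteq> \<phi> U1 \<and> \<phi> (Sv j) \<noteq> \<phi> Vv \<and> \<phi> (Sv j) \<noteq> \<phi> Xv \<and> \<phi> (Sv j) \<noteq> \<phi> Wv \<and>
      \<phi> (Sp k) \<noteq> \<phi> U1 \<and> \<phi> (Sp k) \<noteq> \<phi> Vv \<and> \<phi> (Sp k) \<noteq> \<phi> Xv \<and> \<phi> (Sp k) \<noteq> \<phi> Wv \<and> \<phi> (Sv j) \<noteq> \<phi> (Sp k))"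
    if j: "j \<in> {1..n}" and k: "k \<in> {1..n}" for j k
    using LS[OF P nUS[OF j] nWS[OF k] nSS[OF j k] lt_Sv[OF j] lt_Sp[OF k]] .
  show ?thesis
  proof (cases "\<phi> (Sv 1) = \<phi> Vv \<and> \<phi> (Sp 1) = \<phi> Xv")
    case True
    have allS: "\<phi> (Sv j) = \<phi> Vv" if "j \<in> {1..n}" for j using LSj[OF that in1] True by blast
    have allSp: "\<phi> (Sp k) = \<phi> Xv" if "k \<in> {1..n}" for k using LSj[OF in1 that] True by blast
    have cov: "near (\<phi> Vv) (\<phi> z) \<or> near (\<phi> Xv) (\<phi> z) \<or> \<phi> z = \<phi> U1 \<or> \<phi> z = \<phi> Wv"
      if z: "z \<in> fst (G' Q S n)" for z
    proof (cases z)
      case (Qv q)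
      hence "q \<in> Q" using z by (simp add: VQv)
      hence "q \<in> S n" using Sn by simp
      hence "near (\<phi> (Qv q)) (\<phi> Xv)" using nE[OF E_QSp[OF inn]] allSp[OF inn] by metis
      thus ?thesis using Qv near_sym by blast
    next
      case (Sv j)
      hence "j \<in> {1..n}" using z by (simp add: VSv)
      thus ?thesis using Sv allS near_refl by metis
    next
      case (Sp j)
      hence "j \<in> {1..n}" using z by (simp add: VSp)
      thus ?thesis using Sp allSp near_refl by metis
    next
      case (Qp q j)
      hence "j \<in> {1..n}" "q \<in> S j" using z by (auto simp: VQp)
      hence "near (\<phi> (Qp q j)) (\<phi> Vv)" using nE[OF E_QpS] allS by metis
      thus ?thesis using Qp near_sym by blast
    qed (auto simp: near_refl)
    have "near (\<phi> Vv) y \<or> near (\<phi> Xv) y \<or> y = \<phi> U1 \<or> y = \<phi> Wv" if "y < 6" for y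
      using H2 that cov by blast
    hence False using Lmiss[OF P] by blast
    thus ?thesis ..
  next
    case False
    define al where "al = \<phi> (Sv 1)"
    define be where "be = \<phi> (Sp 1)"
    have main: "al \<noteq> \<phi> U1" "al \<noteq> \<phi> Vv" "al \<noteq> \<phi> Xv" "al \<noteq> \<phi> Wv" "be \<noteq> \<phi> U1" "be \<noteq> \<phi> Vv"
      "be \<noteq> \<phi> Xv" "be \<noteq> \<phi> Wv" "al \<noteq> be"
      using LSj[OF in1 in1] False unfolding al_def be_def by auto
    have al6: "al < 6" and be6: "be < 6" unfolding al_def be_def using lt_Sv[OF in1] lt_Sp[OF in1] by auto
    have allS: "\<phi> (Sv j) = al" if j: "j \<in> {1..n}" for j
    proof -
      have "\<phi> (Sv j) \<noteq> \<phi> U1 \<and> \<phi> (Sv j) \<noteq> \<phi> Vv" using LSj[OF j in1] main unfolding be_def by auto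
      thus ?thesis using LU[OF P nUS[OF j] _ _ nUS[OF in1] _ _ lt_Sv[OF j] lt_Sv[OF in1]] main
        unfolding al_def by auto
    qed
    have allSp: "\<phi> (Sp k) = be" if k: "k \<in> {1..n}" for k
    proof -
      have "\<phi> (Sp k) \<noteq> \<phi> Wv \<and> \<phi> (Sp k) \<noteq> \<phi> Xv" using LSj[OF in1 k] main unfolding al_def by auto
      thus ?thesis using LW[OF P nWS[OF k] _ _ nWS[OF in1] _ _ lt_Sp[OF k] lt_Sp[OF in1]] main
        unfolding be_def by auto
    qed
    have nab: "near al be" unfolding al_def be_def using nSS[OF in1 in1] .
    have nua: "near (\<phi> U1) al" unfolding al_def using nUS[OF in1] .
    have nwb: "near (\<phi> Wv) be" unfolding be_def using nWS[OF in1] .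
    have alnot: "al \<notin> {\<phi> U1, \<phi> Vv, \<phi> Xv, \<phi> Wv}" and benot: "be \<notin> {\<phi> U1, \<phi> Vv, \<phi> Xv, \<phi> Wv}"
      using main by auto
    have onlyU: "z = U1" if z: "z \<in> fst (G' Q S n)" "\<phi> z = \<phi> U1" for z
    proof (rule ccontr)
      assume zU: "z \<noteq> U1"
      let ?X = "{x\<in>fst (G' Q S n). \<phi> x = \<phi> U1}"
      have "{U1} \<subseteq> ?X" "{U1} \<noteq> {}" "{U1} \<noteq> ?X" using Vspecial z zU by auto
      then obtain b where b: "b \<in> ?X" "b \<noteq> U1" "{U1, b} \<in> snd (G' Q S n)"
        using fiber_conn[OF lt_sp(1)] by blast
      from N_U1[OF b(3)] show False
      proof
        assume "b = Vv" thus False using b Pd by auto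
      next
        assume "\<exists>j\<in>{1..n}. b = Sv j"
        then obtain j where "j \<in> {1..n}" "b = Sv j" by blast
        thus False using b allS main by auto
      qed
    qed
    have onlyW: "z = Wv" if z: "z \<in> fst (G' Q S n)" "\<phi> z = \<phi> Wv" for z
    proof (rule ccontr)
      assume zW: "z \<noteq> Wv"
      let ?X = "{x\<in>fst (G' Q S n). \<phi> x = \<phi> Wv}"
      have "{Wv} \<subseteq> ?X" "{Wv} \<noteq> {}" "{Wv} \<noteq> ?X" using Vspecial z zW by auto
      then obtain b where b: "b \<in> ?X" "b \<noteq> Wv" "{Wv, b} \<in> snd (G' Q S n)"
        using fiber_conn[OF lt_sp(4)] by blast
      from N_Wv[OF b(3)] show False
      proof
        assume "b = Xv" thus False using b Pd by auto
      next
        assume "\<exists>j\<in>{1..n}. b = Sp j"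
        then obtain j where "j \<in> {1..n}" "b = Sp j" by blast
        thus False using b allSp main by auto
      qed
    qed
    have Qvab: "\<phi> (Qv q) = al \<or> \<phi> (Qv q) = be" if q: "q \<in> Q" for q
    proof -
      have qn: "q \<in> S n" using q Sn by simp
      have v: "Qv q \<in> fst (G' Q S n)" using q by (simp add: VQv)
      have "near be (\<phi> (Qv q))" using nE[OF E_QSp[where Q=Q and S=S and n=n, OF inn qn]] allSp[OF inn] near_sym by metis
      moreover have "\<phi> (Qv q) \<noteq> \<phi> Wv" using onlyW[OF v] by auto
      moreover have "\<phi> (Qv q) < 6" using H1 v by blast
      ultimately show ?thesis using LB[OF P nua nwb nab alnot benot main(9) al6 be6] by blast
    qed
    have Qpab: "\<phi> (Qp q j) = al \<or> \<phi> (Qp q j) = be" if j: "j \<in> {1..n}" and q: "q \<in> S j" for q j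
    proof -
      have v: "Qp q j \<in> fst (G' Q S n)" using j q by (simp add: VQp)
      have "near al (\<phi> (Qp q j))" using nE[OF E_QpS[where Q=Q and S=S and n=n, OF j q]] allS[OF j] near_sym by metis
      moreover have "\<phi> (Qp q j) \<noteq> \<phi> U1" using onlyU[OF v] by auto
      moreover have "\<phi> (Qp q j) < 6" using H1 v by blast
      ultimately show ?thesis using LA[OF P nua nwb nab alnot benot main(9) al6 be6] by blast
    qed
    define Q1 where "Q1 = {q\<in>Q. \<phi> (Qv q) = be}"
    define Q2 where "Q2 = {q\<in>Q. \<phi> (Qv q) = al}"
    have part1: "Q1 \<inter> S j \<noteq> {}" if j: "j \<in> {1..n}" for j
    proof -
      define j' where "j' = (if j = 1 then 2 else (1::nat))"
      have j': "j' \<in> {1..n}" "j' \<noteq> j" using j in1 in2 unfolding j'_def by auto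
      let ?X = "{x\<in>fst (G' Q S n). \<phi> x = be}"
      have "{Sp j} \<subseteq> ?X" "{Sp j} \<noteq> {}" "{Sp j} \<noteq> ?X"
        using j j' allSp by (auto simp: VSp)
      then obtain b where b: "b \<in> ?X" "b \<noteq> Sp j" "{Sp j, b} \<in> snd (G' Q S n)"
        using fiber_conn[OF be6] by blast
      from N_Sp[OF b(3)] show ?thesis
      proof (elim disjE)
        assume "b = Wv" thus ?thesis using b main by auto
      next
        assume "\<exists>k\<in>{1..n}. b = Sv k"
        then obtain k where "k \<in> {1..n}" "b = Sv k" by blast
        thus ?thesis using b allS main by auto
      next
        assume "\<exists>q\<in>S j. b = Qv q"
        then obtain q where q: "q \<in> S j" "b = Qv q" by blast
        have "q \<in> Q" using q SQj[OF j] by auto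
        hence "q \<in> Q1" using b q unfolding Q1_def by auto
        thus ?thesis using q by auto
      qed
    qed
    have part2: "Q2 \<inter> S j \<noteq> {}" if j: "j \<in> {1..n}" for j
    proof
      assume none: "Q2 \<inter> S j = {}"
      define j' where "j' = (if j = 1 then 2 else (1::nat))"
      have j': "j' \<in> {1..n}" "j' \<noteq> j" using j in1 in2 unfolding j'_def by auto
      let ?X = "{x\<in>fst (G' Q S n). \<phi> x = al}"
      let ?Y = "{Sv j} \<union> {Qp q j | q. q \<in> S j \<and> \<phi> (Qp q j) = al}"
      have Y1: "?Y \<subseteq> ?X" using j allS by (auto simp: VSv VQp)
      have Y2: "?Y \<noteq> {}" by blast
      have "Sv j' \<in> ?X" using j' allS by (simp add: VSv)
      moreover have "Sv j' \<notin> ?Y" using j'(2) by blast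
      ultimately have Y3: "?Y \<noteq> ?X" by blast
      obtain a b where ab: "a \<in> ?Y" "b \<in> ?X - ?Y" "{a, b} \<in> snd (G' Q S n)"
        using fiber_conn[OF al6 Y1 Y2 Y3] by blast
      from ab(1) show False
      proof
        assume "a \<in> {Sv j}"
        hence a: "a = Sv j" by simp
        from N_Sv[OF ab(3)[unfolded a]] show False
        proof (elim disjE)
          assume "b = U1" thus False using ab main by auto
        next
          assume "\<exists>k\<in>{1..n}. b = Sp k"
          then obtain k where "k \<in> {1..n}" "b = Sp k" by blast
          thus False using ab allSp main by auto
        next
          assume "\<exists>q\<in>S j. b = Qp q j"
          then obtain q where "q \<in> S j" "b = Qp q j" by blast
          thus False using ab by auto
        qed
      next
        assume "a \<in> {Qp q j | q. q \<in> S j \<and> \<phi> (Qp q j) = al}"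
        then obtain q where q: "q \<in> S j" "a = Qp q j" by blast
        from N_Qp[OF ab(3)[unfolded q(2)]] show False
        proof
          assume b: "b = Qv q"
          have "q \<in> Q" using q SQj[OF j] by auto
          hence "q \<in> Q2" using ab b unfolding Q2_def by auto
          thus False using none q by auto
        next
          assume "b = Sv j" thus False using ab by auto
        qed
      qed
    qed
    have "two_colouring Q (S ` {1..n}) Q1 Q2"
      unfolding two_colouring_def
    proof (intro conjI ballI)
      show "Q1 \<union> Q2 = Q" using Qvab unfolding Q1_def Q2_def by auto
      show "Q1 \<inter> Q2 = {}" using main(9) unfolding Q1_def Q2_def by auto
    next
      fix T assume "T \<in> S ` {1..n}"
      then obtain j where "j \<in> {1..n}" "T = S j" by blast
      thus "Q1 \<inter> T \<noteq> {}" "Q2 \<inter> T \<noteq> {}" using part1 part2 by auto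
    qed
    thus ?thesis by blast
  qed
qed

end



lemma conn_rank:
  assumes c: "c \<in> X" and par: "\<forall>x\<in>X. x \<noteq> c \<longrightarrow> (\<exists>y\<in>X. {x,y} \<in> snd G \<and> (h::'a \<Rightarrow> nat) y < h x)"
  shows "conn G X"
  unfolding conn_def
proof (intro allI impI)
  fix Y assume Y: "Y \<subseteq> X" "Y \<noteq> {}" "Y \<noteq> X"
  show "\<exists>a\<in>Y. \<exists>b\<in>X - Y. {a,b} \<in> snd G"
  proof (rule ccontr)
    assume no: "\<not> (\<exists>a\<in>Y. \<exists>b\<in>X - Y. {a,b} \<in> snd G)"
    have no2: "\<not> (\<exists>a\<in>X - Y. \<exists>b\<in>Y. {a,b} \<in> snd G)" using no by (metis insert_commute)
    define Z where "Z = (if c \<in> Y then X - Y else Y)"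
    have Zne: "Z \<noteq> {}" using Y unfolding Z_def by auto
    have cZ: "c \<notin> Z" unfolding Z_def by auto
    have ZX: "Z \<subseteq> X" using Y unfolding Z_def by auto
    have closed: "y \<in> Z" if "x \<in> Z" "y \<in> X" "{x,y} \<in> snd G" for x y
      using that no no2 unfolding Z_def by (auto split: if_splits)
    obtain x0 where "x0 \<in> Z" using Zne by blast
    then obtain x where x: "x \<in> Z" "\<forall>z. z \<in> Z \<longrightarrow> h x \<le> h z"
      using ex_has_least_nat[of "\<lambda>z. z \<in> Z" x0 h] by blast
    have "x \<in> X" "x \<noteq> c" using x ZX cZ by auto
    then obtain y where y: "y \<in> X" "{x,y} \<in> snd G" "h y < h x" using par by blast
    have "y \<in> Z" using closed[OF x(1) y(1,2)] .
    thus False using x y by fastforce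
  qed
qed

definition lab :: "'q set \<Rightarrow> 'q vtx \<Rightarrow> nat" where
  "lab Q1 z = (case z of Qv q \<Rightarrow> if q \<in> Q1 then 4 else 5 | Sv j \<Rightarrow> 5 | Sp j \<Rightarrow> 4
     | Qp q j \<Rightarrow> if q \<in> Q1 then 4 else 5 | U1 \<Rightarrow> 0 | Vv \<Rightarrow> 1 | Xv \<Rightarrow> 2 | Wv \<Rightarrow> 3)"

definition repv :: "nat \<Rightarrow> 'q vtx" where
  "repv i = (if i = 0 then U1 else if i = 1 then Vv else if i = 2 then Xv else if i = 3 then Wv
     else if i = 4 then Sp 1 else Sv 1)"

lemma lab_lt: "lab Q1 z < 6" unfolding lab_def by (auto split: vtx.split)

lemma near_dbl: "{a,c} = {x,y} \<Longrightarrow> near (f x) (f y) \<Longrightarrow> near (f a) (f c)"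
  by (auto simp: doubleton_eq_iff intro: near_sym)

lemma lab_near: assumes "{a,c} \<in> snd (G' Q S n)" shows "near (lab Q1 a) (lab Q1 c)"
proof -
  from assms[unfolded G'_def snd_conv] show ?thesis
  proof (elim UnE)
    assume "{a,c} \<in> {{Qp q j, Qv q} |q j. j \<in> {1..n} \<and> q \<in> S j}"
    then obtain q j where e: "{a,c} = {Qp q j, Qv q}" by blast
    have "near (lab Q1 (Qp q j)) (lab Q1 (Qv q))" by (simp add: lab_def near_refl)
    thus ?thesis using near_dbl[OF e] by blast
  next
    assume "{a,c} \<in> {{Qp q j, Sv j} |q j. j \<in> {1..n} \<and> q \<in> S j}"
    then obtain q j where e: "{a,c} = {Qp q j, Sv j}" by blast
    have "near (lab Q1 (Qp q j)) (lab Q1 (Sv j))" by (simp add: lab_def near_def)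
    thus ?thesis using near_dbl[OF e] by blast
  next
    assume "{a,c} \<in> {{Qv q, Sp j} |q j. j \<in> {1..n} \<and> q \<in> S j}"
    then obtain q j where e: "{a,c} = {Qv q, Sp j}" by blast
    have "near (lab Q1 (Qv q)) (lab Q1 (Sp j))" by (simp add: lab_def near_def)
    thus ?thesis using near_dbl[OF e] by blast
  next
    assume "{a,c} \<in> {{Sv j, Sp k} |j k. j \<in> {1..n} \<and> k \<in> {1..n}}"
    then obtain j k where e: "{a,c} = {Sv j, Sp k}" by blast
    have "near (lab Q1 (Sv j)) (lab Q1 (Sp k))" by (simp add: lab_def near_def)
    thus ?thesis using near_dbl[OF e] by blast
  next
    assume "{a,c} \<in> {{U1, Sv j} |j. j \<in> {1..n}}"
    then obtain j where e: "{a,c} = {U1, Sv j}" by blast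
    have "near (lab Q1 (U1)) (lab Q1 (Sv j))" by (simp add: lab_def near_def)
    thus ?thesis using near_dbl[OF e] by blast
  next
    assume "{a,c} \<in> {{U1, Vv}}"
    hence e: "{a,c} = {U1, Vv}" by blast
    have "near (lab Q1 (U1)) (lab Q1 (Vv))" by (simp add: lab_def near_def)
    thus ?thesis using near_dbl[OF e] by blast
  next
    assume "{a,c} \<in> {{Wv, Sp j} |j. j \<in> {1..n}}"
    then obtain j where e: "{a,c} = {Wv, Sp j}" by blast
    have "near (lab Q1 (Wv)) (lab Q1 (Sp j))" by (simp add: lab_def near_def)
    thus ?thesis using near_dbl[OF e] by blast
  next
    assume "{a,c} \<in> {{Xv, Vv}, {Xv, Wv}}"
    hence "{a,c} = {Xv, Vv} \<or> {a,c} = {Xv, Wv}" by blast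
    thus ?thesis
    proof
      assume e: "{a,c} = {Xv, Vv}"
      have "near (lab Q1 (Xv)) (lab Q1 (Vv))" by (simp add: lab_def near_def)
      thus ?thesis using near_dbl[OF e] by blast
    next
      assume e: "{a,c} = {Xv, Wv}"
      have "near (lab Q1 (Xv)) (lab Q1 (Wv))" by (simp add: lab_def near_def)
      thus ?thesis using near_dbl[OF e] by blast
    qed
  qed
qed

lemma forward:
  assumes fin: "finite Q" and n2: "n \<ge> 2" and SQ: "\<forall>j\<in>{1..n}. S j \<noteq> {} \<and> S j \<subseteq> Q"
    and Sn: "S n = Q" and col: "two_colouring Q (S ` {1..n}) Q1 Q2"
  shows "has_contraction (G' Q S n) C6"
proof -
  let ?G = "G' Q S n"
  let ?V = "fst (G' Q S n)"
  have in1: "1 \<in> {1..n}" and inn: "n \<in> {1..n}" using n2 by auto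
  have SQ': "\<forall>j\<in>{1..n}. S j \<subseteq> Q" using SQ by blast
  have cu: "Q1 \<union> Q2 = Q" and cd: "Q1 \<inter> Q2 = {}"
    and cs: "\<And>j. j \<in> {1..n} \<Longrightarrow> Q1 \<inter> S j \<noteq> {} \<and> Q2 \<inter> S j \<noteq> {}"
    using col unfolding two_colouring_def by auto
  have wf: "wfg ?G" using wfG'[OF SQ'] .
  have fG: "finite ?V" using finG'[OF fin SQ'] .
  have rep: "\<forall>i\<in>{0..<6}. repv i \<in> ?V \<and> lab Q1 (repv i) = i"
  proof
    fix i :: nat assume "i \<in> {0..<6}"
    hence "i = 0 \<or> i = 1 \<or> i = 2 \<or> i = 3 \<or> i = 4 \<or> i = 5" by auto
    thus "repv i \<in> ?V \<and> lab Q1 (repv i) = i"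
      using in1 by (elim disjE) (simp_all add: repv_def lab_def Vspecial VSv VSp)
  qed
  have L: "lab Q1 ` ?V = {0..<6}"
  proof
    show "lab Q1 ` ?V \<subseteq> {0..<6}" using lab_lt by auto
    show "{0..<6} \<subseteq> lab Q1 ` ?V" using rep by (metis image_eqI subsetI)
  qed
  have small: "{x\<in>?V. lab Q1 x = i} \<subseteq> {repv i}" if "i < 4" for i
  proof
    fix x assume "x \<in> {x\<in>?V. lab Q1 x = i}"
    hence "lab Q1 x = i" by simp
    thus "x \<in> {repv i}" using that by (cases x) (auto simp: lab_def repv_def split: if_splits)
  qed
  have QQ: "q \<in> Q" if "j \<in> {1..n}" "q \<in> S j" for q j using SQ that by blast
  have c4: "conn ?G {x\<in>?V. lab Q1 x = 4}"
  proof (rule conn_rank[where c = "Sp n" and h = "\<lambda>z. case z of Sp j \<Rightarrow> if j = n then 0 else 2 | Qv q \<Rightarrow> 1 | _ \<Rightarrow> 2"])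
    show "Sp n \<in> {x\<in>?V. lab Q1 x = 4}" using inn by (simp add: VSp lab_def)
    show "\<forall>x\<in>{x\<in>?V. lab Q1 x = 4}. x \<noteq> Sp n \<longrightarrow> (\<exists>y\<in>{x\<in>?V. lab Q1 x = 4}. {x,y} \<in> snd ?G \<and>
      (case y of Sp j \<Rightarrow> if j = n then 0 else 2 | Qv q \<Rightarrow> 1 | _ \<Rightarrow> 2) < (case x of Sp j \<Rightarrow> if j = n then 0 else 2 | Qv q \<Rightarrow> 1 | _ \<Rightarrow> (2::nat)))"
    proof (intro ballI impI)
      fix x assume x: "x \<in> {x\<in>?V. lab Q1 x = 4}" and xn: "x \<noteq> Sp n"
      show "\<exists>y\<in>{x\<in>?V. lab Q1 x = 4}. {x,y} \<in> snd ?G \<and>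
      (case y of Sp j \<Rightarrow> if j = n then 0 else 2 | Qv q \<Rightarrow> 1 | _ \<Rightarrow> 2) < (case x of Sp j \<Rightarrow> if j = n then 0 else 2 | Qv q \<Rightarrow> 1 | _ \<Rightarrow> (2::nat))"
      proof (cases x)
        case (Qv q)
        hence q: "q \<in> Q" "q \<in> Q1" using x by (auto simp: VQv lab_def split: if_splits)
        hence "q \<in> S n" using Sn by simp
        hence "{Qv q, Sp n} \<in> snd ?G" using E_QSp[where Q=Q and S=S and n=n, OF inn] by blast
        moreover have "Sp n \<in> {x\<in>?V. lab Q1 x = 4}" using inn by (simp add: VSp lab_def)
        ultimately show ?thesis using Qv by force
      next
        case (Sp j)
        hence j: "j \<in> {1..n}" "j \<noteq> n" using x xn by (auto simp: VSp)
        then obtain q where q: "q \<in> Q1" "q \<in> S j" using cs by blast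
        have "{Qv q, Sp j} \<in> snd ?G" using E_QSp[where Q=Q and S=S and n=n, OF j(1) q(2)] .
        hence "{Sp j, Qv q} \<in> snd ?G" by (simp add: insert_commute)
        moreover have "Qv q \<in> {x\<in>?V. lab Q1 x = 4}" using QQ[OF j(1) q(2)] q by (simp add: VQv lab_def)
        ultimately show ?thesis using Sp j by force
      next
        case (Qp q j)
        hence j: "j \<in> {1..n}" "q \<in> S j" "q \<in> Q1" using x by (auto simp: VQp lab_def split: if_splits)
        have "{Qp q j, Qv q} \<in> snd ?G" using E_QpQ[where Q=Q and S=S and n=n, OF j(1,2)] .
        moreover have "Qv q \<in> {x\<in>?V. lab Q1 x = 4}" using QQ[OF j(1,2)] j by (simp add: VQv lab_def)
        ultimately show ?thesis using Qp by force
      qed (use x in \<open>auto simp: lab_def\<close>)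
    qed
  qed
  have c5: "conn ?G {x\<in>?V. lab Q1 x = 5}"
  proof (rule conn_rank[where c = "Sv n" and h = "\<lambda>z. case z of Sv j \<Rightarrow> if j = n then 0 else 4 | Qp q j \<Rightarrow> if j = n then 1 else 3 | Qv q \<Rightarrow> 2 | _ \<Rightarrow> 0"])
    show "Sv n \<in> {x\<in>?V. lab Q1 x = 5}" using inn by (simp add: VSv lab_def)
    show "\<forall>x\<in>{x\<in>?V. lab Q1 x = 5}. x \<noteq> Sv n \<longrightarrow> (\<exists>y\<in>{x\<in>?V. lab Q1 x = 5}. {x,y} \<in> snd ?G \<and>
      (case y of Sv j \<Rightarrow> if j = n then 0 else 4 | Qp q j \<Rightarrow> if j = n then 1 else 3 | Qv q \<Rightarrow> 2 | _ \<Rightarrow> 0) <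
      (case x of Sv j \<Rightarrow> if j = n then 0 else 4 | Qp q j \<Rightarrow> if j = n then 1 else 3 | Qv q \<Rightarrow> 2 | _ \<Rightarrow> (0::nat)))"
    proof (intro ballI impI)
      fix x assume x: "x \<in> {x\<in>?V. lab Q1 x = 5}" and xn: "x \<noteq> Sv n"
      show "\<exists>y\<in>{x\<in>?V. lab Q1 x = 5}. {x,y} \<in> snd ?G \<and>
      (case y of Sv j \<Rightarrow> if j = n then 0 else 4 | Qp q j \<Rightarrow> if j = n then 1 else 3 | Qv q \<Rightarrow> 2 | _ \<Rightarrow> 0) <
      (case x of Sv j \<Rightarrow> if j = n then 0 else 4 | Qp q j \<Rightarrow> if j = n then 1 else 3 | Qv q \<Rightarrow> 2 | _ \<Rightarrow> (0::nat))"
      proof (cases x)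
        case (Qv q)
        hence q: "q \<in> Q" "q \<notin> Q1" using x by (auto simp: VQv lab_def split: if_splits)
        hence qn: "q \<in> S n" using Sn by simp
        have "{Qp q n, Qv q} \<in> snd ?G" using E_QpQ[where Q=Q and S=S and n=n, OF inn qn] .
        hence "{Qv q, Qp q n} \<in> snd ?G" by (simp add: insert_commute)
        moreover have "Qp q n \<in> {x\<in>?V. lab Q1 x = 5}" using inn qn q by (simp add: VQp lab_def)
        ultimately show ?thesis using Qv by force
      next
        case (Sv j)
        hence j: "j \<in> {1..n}" "j \<noteq> n" using x xn by (auto simp: VSv)
        then obtain q where q: "q \<in> Q2" "q \<in> S j" using cs by blast
        have qQ1: "q \<notin> Q1" using q cd by blast
        have "{Qp q j, Sv j} \<in> snd ?G" using E_QpS[where Q=Q and S=S and n=n, OF j(1) q(2)] .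
        hence "{Sv j, Qp q j} \<in> snd ?G" by (simp add: insert_commute)
        moreover have "Qp q j \<in> {x\<in>?V. lab Q1 x = 5}" using j q qQ1 by (simp add: VQp lab_def)
        ultimately show ?thesis using Sv j by force
      next
        case (Qp q j)
        hence j: "j \<in> {1..n}" "q \<in> S j" "q \<notin> Q1" using x by (auto simp: VQp lab_def split: if_splits)
        show ?thesis
        proof (cases "j = n")
          case True
          have "{Qp q j, Sv j} \<in> snd ?G" using E_QpS[where Q=Q and S=S and n=n, OF j(1,2)] .
          moreover have "Sv j \<in> {x\<in>?V. lab Q1 x = 5}" using j by (simp add: VSv lab_def)
          ultimately show ?thesis using Qp True by force
        next
          case False
          have "{Qp q j, Qv q} \<in> snd ?G" using E_QpQ[where Q=Q and S=S and n=n, OF j(1,2)] .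
          moreover have "Qv q \<in> {x\<in>?V. lab Q1 x = 5}" using QQ[OF j(1,2)] j by (simp add: VQv lab_def)
          ultimately show ?thesis using Qp False by force
        qed
      qed (use x in \<open>auto simp: lab_def\<close>)
    qed
  qed
  have cn: "\<forall>i\<in>{0..<6}. conn ?G {x\<in>?V. lab Q1 x = i}"
  proof
    fix i :: nat assume "i \<in> {0..<6}"
    hence "i < 4 \<or> i = 4 \<or> i = 5" by auto
    thus "conn ?G {x\<in>?V. lab Q1 x = i}"
    proof (elim disjE)
      assume "i < 4" thus ?thesis using conn_sub_single[OF small] by blast
    next
      assume "i = 4" thus ?thesis using c4 by simp
    next
      assume "i = 5" thus ?thesis using c5 by simp
    qed
  qed
  have E: "{{lab Q1 a, lab Q1 c} | a c. {a,c} \<in> snd ?G \<and> lab Q1 a \<noteq> lab Q1 c} = snd C6"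
  proof
    show "{{lab Q1 a, lab Q1 c} | a c. {a,c} \<in> snd ?G \<and> lab Q1 a \<noteq> lab Q1 c} \<subseteq> snd C6"
    proof
      fix e assume "e \<in> {{lab Q1 a, lab Q1 c} | a c. {a,c} \<in> snd ?G \<and> lab Q1 a \<noteq> lab Q1 c}"
      then obtain a c where ac: "e = {lab Q1 a, lab Q1 c}" "{a,c} \<in> snd ?G" "lab Q1 a \<noteq> lab Q1 c" by blast
      thus "e \<in> snd C6" using near_C6[OF lab_lt lab_lt ac(3)] lab_near[OF ac(2)] by simp
    qed
    show "snd C6 \<subseteq> {{lab Q1 a, lab Q1 c} | a c. {a,c} \<in> snd ?G \<and> lab Q1 a \<noteq> lab Q1 c}"
    proof
      fix e assume "e \<in> snd C6"
      then obtain k where k: "k < (6::nat)" "e = {k, (k+1) mod 6}" unfolding C6_def by auto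
      have "k = 0 \<or> k = 1 \<or> k = 2 \<or> k = 3 \<or> k = 4 \<or> k = 5" using k(1) by auto
      hence "\<exists>a c. e = {lab Q1 a, lab Q1 c} \<and> {a,c} \<in> snd ?G \<and> lab Q1 a \<noteq> lab Q1 c"
      proof (elim disjE)
        assume "k = 0" thus ?thesis using E_UV[where Q=Q and S=S and n=n] k
          by (intro exI[of _ U1] exI[of _ Vv]) (simp add: lab_def)
      next
        assume "k = 1"
        have "{Vv, Xv} \<in> snd ?G" using E_XV[where Q=Q and S=S and n=n] by (simp add: insert_commute)
        thus ?thesis using k \<open>k = 1\<close> by (intro exI[of _ Vv] exI[of _ Xv]) (simp add: lab_def numeral_2_eq_2)
      next
        assume k2: "k = 2"
        have e2: "e = {lab Q1 Xv, lab Q1 Wv}" using k k2 by (simp add: lab_def)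
        have "lab Q1 Xv \<noteq> lab Q1 Wv" by (simp add: lab_def)
        thus ?thesis using E_XW[where Q=Q and S=S and n=n] e2 by blast
      next
        assume "k = 3" thus ?thesis using E_WSp[where Q=Q and S=S and n=n, OF in1] k
          by (intro exI[of _ Wv] exI[of _ "Sp 1"]) (simp add: lab_def)
      next
        assume "k = 4"
        have "{Sp 1, Sv 1} \<in> snd ?G" using E_SSp[where Q=Q and S=S and n=n, OF in1 in1] by (simp add: insert_commute)
        thus ?thesis using k \<open>k = 4\<close> by (intro exI[of _ "Sp 1"] exI[of _ "Sv 1"]) (simp add: lab_def)
      next
        assume "k = 5"
        have "{Sv 1, U1} \<in> snd ?G" using E_US[where Q=Q and S=S and n=n, OF in1] by (simp add: insert_commute)
        thus ?thesis using k \<open>k = 5\<close> by (intro exI[of _ "Sv 1"] exI[of _ U1]) (simp add: lab_def)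
      qed
      thus "e \<in> {{lab Q1 a, lab Q1 c} | a c. {a,c} \<in> snd ?G \<and> lab Q1 a \<noteq> lab Q1 c}" by blast
    qed
  qed
  have "has_contraction ?G ({0..<6}, {{lab Q1 a, lab Q1 c} | a c. {a,c} \<in> snd ?G \<and> lab Q1 a \<noteq> lab Q1 c})"
    using quot_iso[OF fG wf L] rep cn by blast
  moreover have "({0..<6::nat}, {{lab Q1 a, lab Q1 c} | a c. {a,c} \<in> snd ?G \<and> lab Q1 a \<noteq> lab Q1 c}) = C6"
    unfolding E using fst_C6 by (metis prod.collapse)
  ultimately show ?thesis by simp
qed




lemma backward:
  fixes Q :: "'q set" and S :: "nat \<Rightarrow> 'q set" and n :: nat
  assumes fin: "finite Q" and n2: "n \<ge> 2" and SQ: "\<forall>j\<in>{1..n}. S j \<noteq> {} \<and> S j \<subseteq> Q"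
    and Sn: "S n = Q" and hc: "has_contraction (G' Q S n) C6"
  shows "\<exists>Q1 Q2. two_colouring Q (S ` {1..n}) Q1 Q2"
proof -
  let ?G = "G' Q S n"
  let ?V = "fst (G' Q S n)"
  have SQ': "\<forall>j\<in>{1..n}. S j \<subseteq> Q" using SQ by blast
  have wf: "wfg ?G" using wfG'[OF SQ'] .
  obtain K where ct: "contracts_to ?G K" and iso: "graph_iso K C6" using hc unfolding has_contraction_def by blast
  obtain r where inv: "cinv ?G K r" using contracts_inv[OF ct wf] by blast
  have ra: "\<forall>x\<in>?V. r x \<in> fst K" and rb: "\<forall>k\<in>fst K. \<exists>x\<in>?V. r x = k"
    and rc: "\<forall>k\<in>fst K. conn ?G {x\<in>?V. r x = k}"
    and rd: "\<And>k1 k2. k1\<in>fst K \<Longrightarrow> k2\<in>fst K \<Longrightarrow> k1 \<noteq> k2 \<Longrightarrow> ({k1,k2} \<in> snd K \<longleftrightarrow> (\<exists>a b. {a,b} \<in> snd ?G \<and> r a = k1 \<and> r b = k2))"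
    using inv unfolding cinv_def by auto
  obtain f where bij: "bij_betw f (fst K) {0..<6}"
    and fe: "\<forall>x\<in>fst K. \<forall>y\<in>fst K. {x,y} \<in> snd K \<longleftrightarrow> {f x, f y} \<in> snd C6"
    using iso unfolding graph_iso_def fst_C6 by blast
  have finj: "inj_on f (fst K)" and fim: "f ` fst K = {0..<6}" using bij unfolding bij_betw_def by auto
  define \<phi> where "\<phi> = f \<circ> r"
  have H1: "\<forall>x\<in>?V. \<phi> x < 6" using ra fim unfolding \<phi>_def by auto
  have pre: "\<exists>k\<in>fst K. f k = i" if "i < 6" for i using fim that by (metis atLeastLessThan_iff imageE zero_le)
  have H2: "\<forall>i<6. \<exists>x\<in>?V. \<phi> x = i"
  proof (intro allI impI)
    fix i :: nat assume "i < 6"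
    then obtain k where "k \<in> fst K" "f k = i" using pre by blast
    thus "\<exists>x\<in>?V. \<phi> x = i" using rb unfolding \<phi>_def by auto
  qed
  have H3: "\<forall>a b. {a,b} \<in> snd ?G \<longrightarrow> near (\<phi> a) (\<phi> b)"
  proof (intro allI impI)
    fix a b assume ab: "{a,b} \<in> snd ?G"
    have V: "a \<in> ?V" "b \<in> ?V" using ab wf unfolding wfg_def by auto
    show "near (\<phi> a) (\<phi> b)"
    proof (cases "r a = r b")
      case True thus ?thesis unfolding \<phi>_def by (simp add: near_refl)
    next
      case False
      have K: "r a \<in> fst K" "r b \<in> fst K" using ra V by auto
      have "{r a, r b} \<in> snd K" using rd[OF K False] ab by blast
      hence "{\<phi> a, \<phi> b} \<in> snd C6" using fe K unfolding \<phi>_def by auto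
      moreover have "\<phi> a \<noteq> \<phi> b" using False finj K unfolding \<phi>_def inj_on_def by auto
      ultimately show ?thesis using near_C6 H1 V by blast
    qed
  qed
  have H4: "\<forall>i j. i < 6 \<longrightarrow> j < 6 \<longrightarrow> i \<noteq> j \<longrightarrow> near i j \<longrightarrow> (\<exists>a b. {a,b} \<in> snd ?G \<and> \<phi> a = i \<and> \<phi> b = j)"
  proof (intro allI impI)
    fix i j :: nat assume ij: "i < 6" "j < 6" "i \<noteq> j" "near i j"
    obtain k1 where k1: "k1 \<in> fst K" "f k1 = i" using pre ij by blast
    obtain k2 where k2: "k2 \<in> fst K" "f k2 = j" using pre ij by blast
    have "k1 \<noteq> k2" using k1 k2 ij by auto
    moreover have "{k1,k2} \<in> snd K" using fe k1 k2 near_C6[OF ij(1-3)] ij(4) by auto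
    ultimately obtain a b where "{a,b} \<in> snd ?G" "r a = k1" "r b = k2" using rd k1 k2 by blast
    thus "\<exists>a b. {a,b} \<in> snd ?G \<and> \<phi> a = i \<and> \<phi> b = j" using k1 k2 unfolding \<phi>_def by auto
  qed
  have H5: "\<forall>i<6. conn ?G {x\<in>?V. \<phi> x = i}"
  proof (intro allI impI)
    fix i :: nat assume "i < 6"
    then obtain k where k: "k \<in> fst K" "f k = i" using pre by blast
    have "{x\<in>?V. \<phi> x = i} = {x\<in>?V. r x = k}"
      using k ra finj unfolding \<phi>_def inj_on_def by auto
    thus "conn ?G {x\<in>?V. \<phi> x = i}" using rc k by simp
  qed
  show ?thesis using colouring[where \<phi>=\<phi> and Q=Q and S=S and n=n, OF n2 SQ Sn H1 H2 H3 H4 H5] .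
qed


theorem lemma6:
  fixes Q :: "'q set" and S :: "nat \<Rightarrow> 'q set" and n :: nat
  assumes "finite Q"
    and "n \<ge> 2"
    and "\<forall>j\<in>{1..n}. S j \<noteq> {} \<and> S j \<subseteq> Q"
    and "S n = Q"
  shows "(\<exists>Q1 Q2. two_colouring Q (S ` {1..n}) Q1 Q2) \<longleftrightarrow> has_contraction (G' Q S n) C6"
proof
  assume "\<exists>Q1 Q2. two_colouring Q (S ` {1..n}) Q1 Q2"
  then obtain Q1 Q2 where "two_colouring Q (S ` {1..n}) Q1 Q2" by blast
  thus "has_contraction (G' Q S n) C6" using forward[OF assms] by blast
next
  assume "has_contraction (G' Q S n) C6"
  thus "\<exists>Q1 Q2. two_colouring Q (S ` {1..n}) Q1 Q2" using backward[OF assms] by blast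
qed

end
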